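(* Let $m\ge1$ and $0\le k\le m$. In $G_{m,k}$ put $A_i=a_{i+1}^{-1}a_i$ for $1\le i\le m$ and $B_j=a_{m+j+1}^{-1}a_j$ for $1\le j\le k$. Then the elements $A_1,\dots,A_m,B_1,\dots,B_k$ freely generate a free normal subgroup $F_{m+k}$ (the kernel of the homomorphism $G_{m,k}\to\mathbb Z$ sending every $a_i$ to $1$), and $G_{m,k}\cong F_{m+k}\rtimes_{\phi_{m,k}}\mathbb Z$ with $\mathbb Z=\langle a_1\rangle$, where the monodromy automorphism $\phi_{m,k}(x)=a_1xa_1^{-1}$ is given by $\phi_{m,k}(A_i)=A_1A_2\cdots A_{i-1}\,A_i\,A_{i-1}^{-1}\cdots A_1^{-1}$ for $1\le i\le m$ (so $\phi_{m,k}(A_1)=A_1$), and $\phi_{m,k}(B_j)=A_1A_2\cdots A_m\,(B_1B_2\cdots B_j)\,A_{j-1}^{-1}A_{j-2}^{-1}\cdots A_1^{-1}$ for $1\le j\le k$ (so $\phi_{m,k}(B_1)=A_1\cdots A_mB_1$). Furthermore, $\phi_{m,k}$ is the restriction of $\phi_{m,m}$ to $F_{m+k}$.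
   Context: $G_{m,k}=\langle a_1,\dots,a_{m+k+1}\mid [a_i,a_{i+1}]=1\ (1\le i\le m),\ a_{m+j+1}^{-1}a_ja_{m+j+1}=a_{m+j}\ (1\le j\le k)\rangle$. *)

theory Defs
  imports "HOL-Algebra.Algebra"
begin

text \<open>A letter (x, False) stands for the generator x, (x, True) for its inverse.\<close>
type_synonym 'a word = "('a \<times> bool) list"

fun reduced :: "'a word \<Rightarrow> bool" where
  "reduced [] = True"
| "reduced [_] = True"
| "reduced ((x,b) # (y,c) # w) = (\<not> (x = y \<and> b \<noteq> c) \<and> reduced ((y,c) # w))"

fun cons_red :: "('a \<times> bool) \<Rightarrow> 'a word \<Rightarrow> 'a word" where
  "cons_red l [] = [l]"
| "cons_red (x,b) ((y,c) # w) = (if x = y \<and> b \<noteq> c then w else (x,b) # (y,c) # w)"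

definition normalize :: "'a word \<Rightarrow> 'a word" where
  "normalize w = foldr cons_red w []"

definition FreeGroup :: "'a set \<Rightarrow> 'a word monoid" where
  "FreeGroup S = \<lparr> carrier = {w. fst ` set w \<subseteq> S \<and> reduced w},
                  monoid.mult = (\<lambda>u v. normalize (u @ v)),
                  one = [] \<rparr>"

definition gen :: "'a \<Rightarrow> 'a word" where
  "gen x = [(x, False)]"

definition eval_word :: "('b, 'c) monoid_scheme \<Rightarrow> ('a \<Rightarrow> 'b) \<Rightarrow> 'a word \<Rightarrow> 'b" where
  "eval_word G f w = foldr (\<lambda>(x,b) acc. (if b then inv\<^bsub>G\<^esub> (f x) else f x) \<otimes>\<^bsub>G\<^esub> acc) w \<one>\<^bsub>G\<^esub>"

definition gprod :: "('b, 'c) monoid_scheme \<Rightarrow> 'b list \<Rightarrow> 'b" where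
  "gprod G xs = foldr (\<lambda>x acc. x \<otimes>\<^bsub>G\<^esub> acc) xs \<one>\<^bsub>G\<^esub>"

definition normal_closure :: "('b, 'c) monoid_scheme \<Rightarrow> 'b set \<Rightarrow> 'b set" where
  "normal_closure G R = \<Inter> {N. N \<lhd> G \<and> R \<subseteq> N}"

definition relators :: "nat \<Rightarrow> nat \<Rightarrow> nat word set" where
  "relators m k =
     {normalize [(i,True),(i+1,True),(i,False),(i+1,False)] | i. 1 \<le> i \<and> i \<le> m}
   \<union> {normalize [(m+j+1,True),(j,False),(m+j+1,False),(m+j,True)] | j. 1 \<le> j \<and> j \<le> k}"

definition Gmk :: "nat \<Rightarrow> nat \<Rightarrow> nat word set monoid" where
  "Gmk m k = FreeGroup {1..m+k+1} Mod normal_closure (FreeGroup {1..m+k+1}) (relators m k)"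

definition agen :: "nat \<Rightarrow> nat \<Rightarrow> nat \<Rightarrow> nat word set" where
  "agen m k i = normal_closure (FreeGroup {1..m+k+1}) (relators m k) #>\<^bsub>FreeGroup {1..m+k+1}\<^esub> gen i"

definition Aelt :: "nat \<Rightarrow> nat \<Rightarrow> nat \<Rightarrow> nat word set" where
  "Aelt m k i = inv\<^bsub>Gmk m k\<^esub> (agen m k (i+1)) \<otimes>\<^bsub>Gmk m k\<^esub> agen m k i"

definition Belt :: "nat \<Rightarrow> nat \<Rightarrow> nat \<Rightarrow> nat word set" where
  "Belt m k j = inv\<^bsub>Gmk m k\<^esub> (agen m k (m+j+1)) \<otimes>\<^bsub>Gmk m k\<^esub> agen m k j"

definition theta :: "nat \<Rightarrow> nat \<Rightarrow> nat word \<Rightarrow> nat word set" where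
  "theta m k = eval_word (Gmk m k) (\<lambda>n. if n \<le> m then Aelt m k n else Belt m k (n - m))"

definition Fsub :: "nat \<Rightarrow> nat \<Rightarrow> nat word set set" where
  "Fsub m k = generate (Gmk m k) (Aelt m k ` {1..m} \<union> Belt m k ` {1..k})"

definition Pprod :: "nat \<Rightarrow> nat \<Rightarrow> nat \<Rightarrow> nat word set" where
  "Pprod m k i = gprod (Gmk m k) (map (Aelt m k) [1..<i+1])"

definition Qprod :: "nat \<Rightarrow> nat \<Rightarrow> nat \<Rightarrow> nat word set" where
  "Qprod m k j = gprod (Gmk m k) (map (Belt m k) [1..<j+1])"

end

theory Submission
  imports Defs
begin

lemma reduced_tl: "reduced (l # w) \<Longrightarrow> reduced w"
  by (cases w; cases l) auto

lemma cons_red_reduced: "reduced w \<Longrightarrow> reduced (cons_red l w)"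
proof (cases w)
  case Nil then show ?thesis by simp
next
  case (Cons a w')
  assume r: "reduced w"
  obtain x b where l: "l = (x,b)" by (cases l)
  obtain y c where a: "a = (y,c)" by (cases a)
  show ?thesis using r Cons l a by (auto dest: reduced_tl)
qed

lemma reduced_normalize: "reduced (normalize w)"
  unfolding normalize_def by (induction w) (auto intro: cons_red_reduced)

lemma normalize_Cons: "normalize (l # w) = cons_red l (normalize w)"
  unfolding normalize_def by simp

lemma normalize_Nil[simp]: "normalize [] = []"
  unfolding normalize_def by simp

lemma cons_red_set: "fst ` set (cons_red l w) \<subseteq> insert (fst l) (fst ` set w)"
proof (cases w)
  case Nil then show ?thesis by simp
next
  case (Cons a w')
  obtain x b where l: "l = (x,b)" by (cases l)
  obtain y c where a: "a = (y,c)" by (cases a)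
  show ?thesis using Cons l a by auto
qed

lemma normalize_set: "fst ` set (normalize w) \<subseteq> fst ` set w"
proof (induction w)
  case Nil then show ?case by simp
next
  case (Cons l w)
  have "fst ` set (normalize (l # w)) \<subseteq> insert (fst l) (fst ` set (normalize w))"
    using cons_red_set[of l "normalize w"] by (simp add: normalize_Cons)
  also have "\<dots> \<subseteq> fst ` set (l # w)" using Cons by auto
  finally show ?case .
qed

lemma normalize_reduced_id: "reduced w \<Longrightarrow> normalize w = w"
proof (induction w)
  case Nil then show ?case by simp
next
  case (Cons l w)
  then have IH: "normalize w = w" using reduced_tl by blast
  show ?case
  proof (cases w)
    case Nil then show ?thesis by (simp add: normalize_Cons)
  next
    case (Cons a w')
    obtain x b where l: "l = (x,b)" by (cases l)
    obtain y c where a: "a = (y,c)" by (cases a)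
    show ?thesis using Cons.prems Cons l a IH by (simp add: normalize_Cons)
  qed
qed

lemma cons_red_cancel:
  assumes "reduced Y" "b \<noteq> c"
  shows "cons_red (x,b) (cons_red (x,c) Y) = Y"
proof (cases Y)
  case Nil then show ?thesis using assms by simp
next
  case (Cons a Y')
  obtain y d where a: "a = (y,d)" by (cases a)
  show ?thesis
  proof (cases "x = y \<and> c \<noteq> d")
    case True
    then show ?thesis using assms Cons a
      by (cases Y'; auto)
  next
    case False
    then show ?thesis using assms Cons a by auto
  qed
qed

lemma foldr_reduced: "reduced y \<Longrightarrow> reduced (foldr cons_red z y)"
  by (induction z) (auto intro: cons_red_reduced)

lemma foldr_cons_red:
  assumes "reduced y" "reduced z"
  shows "foldr cons_red (cons_red l z) y = cons_red l (foldr cons_red z y)"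
proof (cases z)
  case Nil then show ?thesis by simp
next
  case (Cons a z')
  obtain x b where l: "l = (x,b)" by (cases l)
  obtain y' c where a: "a = (y',c)" by (cases a)
  show ?thesis
  proof (cases "x = y' \<and> b \<noteq> c")
    case True
    have "reduced (foldr cons_red z' y)" using assms foldr_reduced by blast
    then show ?thesis using True Cons l a cons_red_cancel[of "foldr cons_red z' y" b c x] by auto
  next
    case False
    then show ?thesis using Cons l a by auto
  qed
qed

lemma foldr_normalize: "reduced y \<Longrightarrow> foldr cons_red (normalize u) y = foldr cons_red u y"
proof (induction u)
  case Nil then show ?case by simp
next
  case (Cons l u)
  then show ?case by (simp add: normalize_Cons foldr_cons_red reduced_normalize)
qed

lemma normalize_append: "normalize (u @ v) = foldr cons_red u (normalize v)"
  unfolding normalize_def by simp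

lemma normalize_normalize_left: "normalize (normalize u @ v) = normalize (u @ v)"
  by (simp add: normalize_append foldr_normalize reduced_normalize)

lemma normalize_normalize_right: "normalize (u @ normalize v) = normalize (u @ v)"
  by (simp add: normalize_append normalize_reduced_id reduced_normalize)

definition winv :: "'a word \<Rightarrow> 'a word" where
  "winv w = rev (map (\<lambda>(x,b). (x, \<not> b)) w)"

lemma normalize_cancel_mid: "normalize (u @ [(x,\<not>b),(x,b)] @ v) = normalize (u @ v)"
  using cons_red_cancel[OF reduced_normalize[of v], of "\<not>b" b x]
  by (simp add: normalize_append normalize_Cons)

lemma normalize_winv: "normalize (winv w @ w) = []"
proof (induction w)
  case Nil then show ?case by (simp add: winv_def)
next
  case (Cons l w)
  obtain x b where l: "l = (x,b)" by (cases l)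
  have "winv (l # w) @ l # w = winv w @ [(x,\<not>b),(x,b)] @ w" using l by (simp add: winv_def)
  then show ?case using Cons normalize_cancel_mid by metis
qed

lemma winv_set: "fst ` set (winv w) = fst ` set w"
  by (force simp: winv_def)

lemma carrier_FreeGroup: "carrier (FreeGroup S) = {w. fst ` set w \<subseteq> S \<and> reduced w}"
  by (simp add: FreeGroup_def)
lemma mult_FreeGroup: "u \<otimes>\<^bsub>FreeGroup S\<^esub> v = normalize (u @ v)"
  by (simp add: FreeGroup_def)
lemma one_FreeGroup: "\<one>\<^bsub>FreeGroup S\<^esub> = []"
  by (simp add: FreeGroup_def)

lemma group_FreeGroup: "group (FreeGroup S)"
proof (rule groupI)
  fix x y assume xy: "x \<in> carrier (FreeGroup S)" "y \<in> carrier (FreeGroup S)"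
  have "fst ` set (normalize (x@y)) \<subseteq> fst ` set (x @ y)" by (rule normalize_set)
  also have "\<dots> \<subseteq> S" using xy by (auto simp: carrier_FreeGroup)
  finally show "x \<otimes>\<^bsub>FreeGroup S\<^esub> y \<in> carrier (FreeGroup S)"
    by (auto simp: carrier_FreeGroup mult_FreeGroup reduced_normalize)
next
  show "\<one>\<^bsub>FreeGroup S\<^esub> \<in> carrier (FreeGroup S)" by (simp add: carrier_FreeGroup one_FreeGroup)
next
  fix x y z
  show "x \<otimes>\<^bsub>FreeGroup S\<^esub> y \<otimes>\<^bsub>FreeGroup S\<^esub> z = x \<otimes>\<^bsub>FreeGroup S\<^esub> (y \<otimes>\<^bsub>FreeGroup S\<^esub> z)"
    by (simp add: mult_FreeGroup normalize_normalize_left normalize_normalize_right)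
next
  fix x assume "x \<in> carrier (FreeGroup S)"
  then show "\<one>\<^bsub>FreeGroup S\<^esub> \<otimes>\<^bsub>FreeGroup S\<^esub> x = x"
    by (simp add: carrier_FreeGroup mult_FreeGroup one_FreeGroup normalize_reduced_id)
next
  fix x assume x: "x \<in> carrier (FreeGroup S)"
  show "\<exists>y\<in>carrier (FreeGroup S). y \<otimes>\<^bsub>FreeGroup S\<^esub> x = \<one>\<^bsub>FreeGroup S\<^esub>"
  proof (intro bexI)
    show "normalize (winv x) \<otimes>\<^bsub>FreeGroup S\<^esub> x = \<one>\<^bsub>FreeGroup S\<^esub>"
      by (simp add: mult_FreeGroup one_FreeGroup normalize_normalize_left normalize_winv)
    show "normalize (winv x) \<in> carrier (FreeGroup S)"
      using x normalize_set[of "winv x"] winv_set[of x]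
      by (auto simp: carrier_FreeGroup reduced_normalize)
  qed
qed


lemma eval_word_Nil[simp]: "eval_word H f [] = \<one>\<^bsub>H\<^esub>"
  by (simp add: eval_word_def)

lemma eval_word_Cons[simp]:
  "eval_word H f ((x,b) # w) = (if b then inv\<^bsub>H\<^esub> (f x) else f x) \<otimes>\<^bsub>H\<^esub> eval_word H f w"
  by (simp add: eval_word_def)

lemma eval_word_closed:
  assumes "group H" "\<forall>x\<in>S. f x \<in> carrier H" "fst ` set w \<subseteq> S"
  shows "eval_word H f w \<in> carrier H"
  using assms(3)
proof (induction w)
  case Nil then show ?case using assms group.is_monoid monoid.one_closed by fastforce
next
  case (Cons l w)
  obtain x b where l: "l = (x,b)" by (cases l)
  have "x \<in> S" using Cons.prems l by auto
  then show ?case using Cons l assms group.inv_closed[OF assms(1)] group.is_monoid[OF assms(1)]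
    by (auto intro: monoid.m_closed)
qed

lemma eval_word_cons_red:
  assumes H: "group H" and f: "\<forall>x\<in>S. f x \<in> carrier H" and z: "fst ` set z \<subseteq> S" and l: "fst l \<in> S"
  shows "eval_word H f (cons_red l z) = eval_word H f (l # z)"
proof (cases z)
  case Nil then show ?thesis by (cases l) simp
next
  case (Cons a z')
  obtain x b where lx: "l = (x,b)" by (cases l)
  obtain y c where a: "a = (y,c)" by (cases a)
  interpret group H by (rule H)
  have ez: "eval_word H f z' \<in> carrier H" using eval_word_closed[OF H f] z Cons by auto
  have fx: "f x \<in> carrier H" using f l lx by auto
  show ?thesis
  proof (cases "x = y \<and> b \<noteq> c")
    case True
    have "inv\<^bsub>H\<^esub> (f x) \<otimes>\<^bsub>H\<^esub> (f x \<otimes>\<^bsub>H\<^esub> eval_word H f z') = eval_word H f z'"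
      "f x \<otimes>\<^bsub>H\<^esub> (inv\<^bsub>H\<^esub> (f x) \<otimes>\<^bsub>H\<^esub> eval_word H f z') = eval_word H f z'"
      using ez fx by (simp_all add: m_assoc[symmetric])
    then show ?thesis using Cons lx a True by (cases b) auto
  next
    case False then show ?thesis using Cons lx a by simp
  qed
qed

lemma eval_word_normalize:
  assumes H: "group H" and f: "\<forall>x\<in>S. f x \<in> carrier H" and w: "fst ` set w \<subseteq> S"
  shows "eval_word H f (normalize w) = eval_word H f w"
  using w
proof (induction w)
  case Nil then show ?case by simp
next
  case (Cons l w)
  obtain x b where lx: "l = (x,b)" by (cases l)
  have ns: "fst ` set (normalize w) \<subseteq> S" using normalize_set[of w] Cons.prems by auto
  have "eval_word H f (normalize (l # w)) = eval_word H f (l # normalize w)"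
    unfolding normalize_Cons using eval_word_cons_red[OF H f ns] Cons.prems by auto
  also have "\<dots> = eval_word H f (l # w)" using Cons lx by simp
  finally show ?case .
qed

lemma eval_word_append:
  assumes H: "group H" and f: "\<forall>x\<in>S. f x \<in> carrier H" and u: "fst ` set u \<subseteq> S" and v: "fst ` set v \<subseteq> S"
  shows "eval_word H f (u @ v) = eval_word H f u \<otimes>\<^bsub>H\<^esub> eval_word H f v"
  using u
proof (induction u)
  case Nil then show ?case using eval_word_closed[OF H f v] H by (simp add: group.is_monoid)
next
  case (Cons l u)
  obtain x b where lx: "l = (x,b)" by (cases l)
  interpret group H by (rule H)
  have "x \<in> S" using Cons.prems lx by auto
  then show ?case using Cons lx eval_word_closed[OF H f v] eval_word_closed[OF H f, of u] f
    by (auto simp: m_assoc)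
qed

lemma eval_word_hom:
  assumes H: "group H" and f: "\<forall>x\<in>S. f x \<in> carrier H"
  shows "eval_word H f \<in> hom (FreeGroup S) H"
proof (rule homI)
  fix w assume "w \<in> carrier (FreeGroup S)"
  then show "eval_word H f w \<in> carrier H"
    using eval_word_closed[OF H f] by (auto simp: carrier_FreeGroup)
next
  fix u v assume uv: "u \<in> carrier (FreeGroup S)" "v \<in> carrier (FreeGroup S)"
  have "eval_word H f (u \<otimes>\<^bsub>FreeGroup S\<^esub> v) = eval_word H f (u @ v)"
    unfolding mult_FreeGroup using eval_word_normalize[OF H f, of "u@v"] uv
    by (auto simp: carrier_FreeGroup)
  also have "\<dots> = eval_word H f u \<otimes>\<^bsub>H\<^esub> eval_word H f v"
    using eval_word_append[OF H f] uv by (auto simp: carrier_FreeGroup)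
  finally show "eval_word H f (u \<otimes>\<^bsub>FreeGroup S\<^esub> v) = eval_word H f u \<otimes>\<^bsub>H\<^esub> eval_word H f v" .
qed

lemma gen_carrier: "x \<in> S \<Longrightarrow> gen x \<in> carrier (FreeGroup S)"
  by (simp add: gen_def carrier_FreeGroup)

lemma inv_gen:
  assumes "x \<in> S" shows "inv\<^bsub>FreeGroup S\<^esub> (gen x) = [(x,True)]"
proof -
  interpret group "FreeGroup S" by (rule group_FreeGroup)
  have "[(x,True)] \<otimes>\<^bsub>FreeGroup S\<^esub> gen x = \<one>\<^bsub>FreeGroup S\<^esub>"
    by (simp add: mult_FreeGroup one_FreeGroup gen_def normalize_Cons)
  moreover have "[(x,True)] \<in> carrier (FreeGroup S)" using assms by (simp add: carrier_FreeGroup)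
  ultimately show ?thesis using inv_equality gen_carrier[OF assms] by blast
qed

lemma FreeGroup_Cons:
  assumes "l # w \<in> carrier (FreeGroup S)"
  shows "l # w = (if snd l then inv\<^bsub>FreeGroup S\<^esub> (gen (fst l)) else gen (fst l)) \<otimes>\<^bsub>FreeGroup S\<^esub> w"
proof -
  have "fst l \<in> S" using assms by (auto simp: carrier_FreeGroup)
  then show ?thesis using assms normalize_reduced_id[of "l # w"] inv_gen[of "fst l" S]
    by (cases l) (auto simp: mult_FreeGroup gen_def carrier_FreeGroup)
qed

lemma FreeGroup_Cons_carrier: "l # w \<in> carrier (FreeGroup S) \<Longrightarrow> w \<in> carrier (FreeGroup S)"
  by (auto simp: carrier_FreeGroup dest: reduced_tl)

lemma hom_inv':
  assumes "h \<in> hom G H" "group G" "group H" "x \<in> carrier G"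
  shows "h (inv\<^bsub>G\<^esub> x) = inv\<^bsub>H\<^esub> (h x)"
  using group_hom.hom_inv[of G H h x] assms by (simp add: group_hom_def group_hom_axioms_def)

lemma hom_unique_FreeGroup:
  assumes H: "group H" and h: "h \<in> hom (FreeGroup S) H" and h': "h' \<in> hom (FreeGroup S) H"
    and eq: "\<forall>x\<in>S. h (gen x) = h' (gen x)" and w: "w \<in> carrier (FreeGroup S)"
  shows "h w = h' w"
  using w
proof (induction w)
  case Nil
  have "h [] = \<one>\<^bsub>H\<^esub>" "h' [] = \<one>\<^bsub>H\<^esub>"
    using hom_one[OF h group_FreeGroup H] hom_one[OF h' group_FreeGroup H] by (auto simp: one_FreeGroup)
  then show ?case by simp
next
  case (Cons l w)
  interpret F: group "FreeGroup S" by (rule group_FreeGroup)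
  have wc: "w \<in> carrier (FreeGroup S)" using FreeGroup_Cons_carrier[OF Cons.prems] .
  have xs: "fst l \<in> S" using Cons.prems by (auto simp: carrier_FreeGroup)
  have gc: "gen (fst l) \<in> carrier (FreeGroup S)" using gen_carrier[OF xs] .
  define g where "g = (if snd l then inv\<^bsub>FreeGroup S\<^esub> (gen (fst l)) else gen (fst l))"
  have gcc: "g \<in> carrier (FreeGroup S)" unfolding g_def using gc by simp
  have lw: "l # w = g \<otimes>\<^bsub>FreeGroup S\<^esub> w" unfolding g_def by (rule FreeGroup_Cons[OF Cons.prems])
  have "h (l # w) = h g \<otimes>\<^bsub>H\<^esub> h w" unfolding lw by (rule hom_mult[OF h gcc wc])
  moreover have "h' (l # w) = h' g \<otimes>\<^bsub>H\<^esub> h' w" unfolding lw by (rule hom_mult[OF h' gcc wc])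
  moreover have "h (inv\<^bsub>FreeGroup S\<^esub> (gen (fst l))) = h' (inv\<^bsub>FreeGroup S\<^esub> (gen (fst l)))"
    using hom_inv'[OF h group_FreeGroup H gc] hom_inv'[OF h' group_FreeGroup H gc] eq xs by simp
  ultimately show ?case using Cons.IH[OF wc] eq xs unfolding g_def by simp
qed

lemma eval_word_gen:
  assumes H: "group H" and f: "\<forall>x\<in>S. f x \<in> carrier H" and x: "x \<in> S"
  shows "eval_word H f (gen x) = f x"
  using f x H by (simp add: gen_def group.is_monoid)


lemma normal_closure_normal:
  fixes G (structure)
  assumes G: "group G" and R: "R \<subseteq> carrier G"
  shows "normal_closure G R \<lhd> G"
proof -
  interpret group G by (rule G)
  let ?A = "{N. N \<lhd> G \<and> R \<subseteq> N}"
  have ne: "carrier G \<in> ?A" using R normal_inv_iff subgroup_self by auto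
  have sg: "subgroup (\<Inter>?A) G"
    by (rule subgroups_Inter) (use ne in \<open>auto intro: normal_imp_subgroup\<close>)
  have cj: "\<forall>x\<in>carrier G. \<forall>h\<in>\<Inter>?A. x \<otimes> h \<otimes> inv x \<in> \<Inter>?A"
  proof (intro ballI)
    fix x h assume x: "x \<in> carrier G" and h: "h \<in> \<Inter>?A"
    show "x \<otimes> h \<otimes> inv x \<in> \<Inter>?A"
    proof
      fix N assume N: "N \<in> ?A"
      then have "h \<in> N" using h by blast
      then show "x \<otimes> h \<otimes> inv x \<in> N" using N x normal_inv_iff by blast
    qed
  qed
  show ?thesis unfolding normal_closure_def using normal_inv_iff sg cj by blast
qed

lemma normal_closure_incl: "R \<subseteq> carrier G \<Longrightarrow> group G \<Longrightarrow> R \<subseteq> normal_closure G R"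
  unfolding normal_closure_def by blast

lemma normal_closure_min: "N \<lhd> G \<Longrightarrow> R \<subseteq> N \<Longrightarrow> normal_closure G R \<subseteq> N"
  unfolding normal_closure_def by blast

lemma hom_coset_const:
  fixes G (structure)
  assumes G: "group G" and H: "group H" and N: "N \<lhd> G" and h: "h \<in> hom G H"
    and Nk: "N \<subseteq> kernel G H h" and x: "x \<in> carrier G" and y: "y \<in> N #> x"
  shows "h y = h x"
proof -
  interpret group G by (rule G)
  obtain n where n: "n \<in> N" "y = n \<otimes> x" using y unfolding r_coset_def by blast
  have nc: "n \<in> carrier G" by (rule subgroup.mem_carrier[OF normal_imp_subgroup[OF N] n(1)])
  have "h n = \<one>\<^bsub>H\<^esub>" using Nk n by (auto simp: kernel_def)
  then show ?thesis using n hom_mult[OF h nc x] h x H by (simp add: hom_in_carrier group.is_monoid)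
qed

lemma induced_hom:
  fixes G (structure)
  assumes G: "group G" and H: "group H" and N: "N \<lhd> G" and h: "h \<in> hom G H"
    and Nk: "N \<subseteq> kernel G H h"
  shows "\<exists>h'. h' \<in> hom (G Mod N) H \<and> (\<forall>x\<in>carrier G. h' (N #> x) = h x)"
proof -
  interpret group G by (rule G)
  interpret normal N G by (rule N)
  define h' where "h' C = h (SOME y. y \<in> C)" for C
  have h'x: "h' (N #> x) = h x" if x: "x \<in> carrier G" for x
  proof -
    have "x \<in> N #> x" using rcos_self[OF x is_subgroup] .
    then have "(SOME y. y \<in> N #> x) \<in> N #> x" by (rule someI)
    then show ?thesis unfolding h'_def using hom_coset_const[OF G H N h Nk x] by blast
  qed
  have "h' \<in> hom (G Mod N) H"
  proof (rule homI)
    fix C assume "C \<in> carrier (G Mod N)"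
    then obtain x where x: "x \<in> carrier G" "C = N #> x" by (auto simp: carrier_FactGroup)
    then show "h' C \<in> carrier H" using h'x h by (simp add: hom_in_carrier)
  next
    fix C D assume "C \<in> carrier (G Mod N)" "D \<in> carrier (G Mod N)"
    then obtain x y where x: "x \<in> carrier G" "C = N #> x" and y: "y \<in> carrier G" "D = N #> y"
      by (auto simp: carrier_FactGroup)
    have "C \<otimes>\<^bsub>G Mod N\<^esub> D = N #> (x \<otimes> y)" using x y rcos_sum by simp
    then show "h' (C \<otimes>\<^bsub>G Mod N\<^esub> D) = h' C \<otimes>\<^bsub>H\<^esub> h' D"
      using x y h'x hom_mult[OF h] by simp
  qed
  then show ?thesis using h'x by blast
qed


lemma (in group) comm_iff:
  "a \<in> carrier G \<Longrightarrow> b \<in> carrier G \<Longrightarrow> (inv a \<otimes> (inv b \<otimes> (a \<otimes> (b \<otimes> \<one>))) = \<one>) = (a \<otimes> b = b \<otimes> a)"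
  by (smt (verit, ccfv_SIG) inv_solve_left l_inv_ex local.inv_equality m_closed)

lemma (in group) conj_iff:
  "a \<in> carrier G \<Longrightarrow> c \<in> carrier G \<Longrightarrow> d \<in> carrier G \<Longrightarrow> (inv c \<otimes> (a \<otimes> (c \<otimes> (inv d \<otimes> \<one>))) = \<one>) = (a \<otimes> c = c \<otimes> d)"
  by (smt (verit, best) inv_solve_right inv_unique l_inv_ex local.inv_equality m_assoc m_closed r_inv_ex)

definition NC :: "nat \<Rightarrow> nat \<Rightarrow> nat word set" where
  "NC m k = normal_closure (FreeGroup {1..m+k+1}) (relators m k)"

lemma relators_carrier: "relators m k \<subseteq> carrier (FreeGroup {1..m+k+1})"
proof
  fix r assume "r \<in> relators m k"
  then obtain u where r: "r = normalize u" and u: "fst ` set u \<subseteq> {1..m+k+1}"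
    unfolding relators_def by auto
  then show "r \<in> carrier (FreeGroup {1..m+k+1})"
    using normalize_set[of u] by (auto simp: carrier_FreeGroup reduced_normalize)
qed

lemma NC_normal: "NC m k \<lhd> FreeGroup {1..m+k+1}"
  unfolding NC_def by (rule normal_closure_normal[OF group_FreeGroup relators_carrier])

lemma group_Gmk: "group (Gmk m k)"
  unfolding Gmk_def using NC_normal[unfolded NC_def] normal.factorgroup_is_group by blast

lemma Gmk_NC: "Gmk m k = FreeGroup {1..m+k+1} Mod NC m k"
  by (simp add: Gmk_def NC_def)

lemma agen_NC: "agen m k i = NC m k #>\<^bsub>FreeGroup {1..m+k+1}\<^esub> gen i"
  by (simp add: agen_def NC_def)

lemma coset_carrier_Gmk:
  "w \<in> carrier (FreeGroup {1..m+k+1}) \<Longrightarrow> NC m k #>\<^bsub>FreeGroup {1..m+k+1}\<^esub> w \<in> carrier (Gmk m k)"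
  by (auto simp: Gmk_NC carrier_FactGroup)

lemma agen_carrier: "i \<in> {1..m+k+1} \<Longrightarrow> agen m k i \<in> carrier (Gmk m k)"
  unfolding agen_NC by (rule coset_carrier_Gmk[OF gen_carrier])

lemma quot_hom: "(\<lambda>w. NC m k #>\<^bsub>FreeGroup {1..m+k+1}\<^esub> w) \<in> hom (FreeGroup {1..m+k+1}) (Gmk m k)"
  unfolding Gmk_NC using normal.r_coset_hom_Mod[OF NC_normal] .

lemma quot_eval:
  assumes w: "w \<in> carrier (FreeGroup {1..m+k+1})"
  shows "NC m k #>\<^bsub>FreeGroup {1..m+k+1}\<^esub> w = eval_word (Gmk m k) (agen m k) w"
proof (rule hom_unique_FreeGroup[OF group_Gmk quot_hom _ _ w])
  show "eval_word (Gmk m k) (agen m k) \<in> hom (FreeGroup {1..m+k+1}) (Gmk m k)"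
    by (rule eval_word_hom[OF group_Gmk]) (auto intro: agen_carrier)
  show "\<forall>x\<in>{1..m + k + 1}. NC m k #>\<^bsub>FreeGroup {1..m + k + 1}\<^esub> gen x =
        eval_word (Gmk m k) (agen m k) (gen x)"
    using eval_word_gen[OF group_Gmk, of "{1..m+k+1}" "agen m k"] agen_carrier
    by (auto simp: agen_NC)
qed

lemma carrier_Gmk_eval:
  assumes "g \<in> carrier (Gmk m k)"
  shows "\<exists>w\<in>carrier (FreeGroup {1..m+k+1}). g = eval_word (Gmk m k) (agen m k) w"
  using assms quot_eval by (auto simp: Gmk_NC carrier_FactGroup)

lemma relator_eval_one:
  assumes u: "fst ` set u \<subseteq> {1..m+k+1}" and r: "normalize u \<in> relators m k"
  shows "eval_word (Gmk m k) (agen m k) u = \<one>\<^bsub>Gmk m k\<^esub>"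
proof -
  have rc: "normalize u \<in> carrier (FreeGroup {1..m+k+1})" using r relators_carrier by blast
  have "eval_word (Gmk m k) (agen m k) u = eval_word (Gmk m k) (agen m k) (normalize u)"
    using eval_word_normalize[OF group_Gmk _ u] agen_carrier by auto
  also have "\<dots> = NC m k #>\<^bsub>FreeGroup {1..m+k+1}\<^esub> normalize u" using quot_eval[OF rc] by simp
  also have "\<dots> = NC m k"
    using subgroup.rcos_const[OF normal_imp_subgroup[OF NC_normal] group_FreeGroup]
      normal_closure_incl[OF relators_carrier group_FreeGroup] r unfolding NC_def by blast
  finally show ?thesis by (simp add: Gmk_NC)
qed

lemma rel_comm:
  assumes "1 \<le> i" "i \<le> m"
  shows "agen m k i \<otimes>\<^bsub>Gmk m k\<^esub> agen m k (i+1) = agen m k (i+1) \<otimes>\<^bsub>Gmk m k\<^esub> agen m k i"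
proof -
  let ?u = "[(i,True),(i+1,True),(i,False),(i+1,False)]"
  have "normalize ?u \<in> relators m k" using assms unfolding relators_def by blast
  then have "eval_word (Gmk m k) (agen m k) ?u = \<one>\<^bsub>Gmk m k\<^esub>"
    using relator_eval_one[of ?u] assms by auto
  then show ?thesis
    using group.comm_iff[OF group_Gmk agen_carrier agen_carrier, of i m k "i+1"] assms by simp
qed

lemma rel_conj:
  assumes "1 \<le> j" "j \<le> k"
  shows "agen m k j \<otimes>\<^bsub>Gmk m k\<^esub> agen m k (m+j+1) = agen m k (m+j+1) \<otimes>\<^bsub>Gmk m k\<^esub> agen m k (m+j)"
proof -
  let ?u = "[(m+j+1,True),(j,False),(m+j+1,False),(m+j,True)]"
  have "normalize ?u \<in> relators m k" using assms unfolding relators_def by blast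
  then have "eval_word (Gmk m k) (agen m k) ?u = \<one>\<^bsub>Gmk m k\<^esub>"
    using relator_eval_one[of ?u] assms by auto
  then show ?thesis
    using group.conj_iff[OF group_Gmk agen_carrier agen_carrier agen_carrier, of j m k "m+j+1" "m+j"] assms
    by simp
qed

lemma Gmk_universal:
  assumes H: "group H" and f: "\<forall>i\<in>{1..m+k+1}. f i \<in> carrier H"
    and c1: "\<forall>i. 1 \<le> i \<and> i \<le> m \<longrightarrow> f i \<otimes>\<^bsub>H\<^esub> f (i+1) = f (i+1) \<otimes>\<^bsub>H\<^esub> f i"
    and c2: "\<forall>j. 1 \<le> j \<and> j \<le> k \<longrightarrow> f j \<otimes>\<^bsub>H\<^esub> f (m+j+1) = f (m+j+1) \<otimes>\<^bsub>H\<^esub> f (m+j)"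
  shows "\<exists>h\<in>hom (Gmk m k) H. \<forall>i\<in>{1..m+k+1}. h (agen m k i) = f i"
proof -
  let ?F = "FreeGroup {1..m+k+1}"
  have eh: "eval_word H f \<in> hom ?F H" by (rule eval_word_hom[OF H f])
  have gh: "group_hom ?F H (eval_word H f)"
    using eh H group_FreeGroup by (simp add: group_hom_def group_hom_axioms_def)
  have rk: "relators m k \<subseteq> kernel ?F H (eval_word H f)"
  proof
    fix r assume r: "r \<in> relators m k"
    then have rc: "r \<in> carrier ?F" using relators_carrier by blast
    from r obtain u where ru: "r = normalize u" and u: "fst ` set u \<subseteq> {1..m+k+1}"
      and e: "eval_word H f u = \<one>\<^bsub>H\<^esub>"
    proof (cases rule: UnE[OF r[unfolded relators_def]])
      case 1
      then obtain i where i: "r = normalize [(i,True),(i+1,True),(i,False),(i+1,False)]" "1 \<le> i" "i \<le> m"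
        by blast
      have "eval_word H f [(i,True),(i+1,True),(i,False),(i+1,False)] = \<one>\<^bsub>H\<^esub>"
        using group.comm_iff[OF H, of "f i" "f (i+1)"] f c1 i by simp
      then show ?thesis using that i by auto
    next
      case 2
      then obtain j where j: "r = normalize [(m+j+1,True),(j,False),(m+j+1,False),(m+j,True)]" "1 \<le> j" "j \<le> k"
        by blast
      have "eval_word H f [(m+j+1,True),(j,False),(m+j+1,False),(m+j,True)] = \<one>\<^bsub>H\<^esub>"
        using group.conj_iff[OF H, of "f j" "f (m+j+1)" "f (m+j)"] f c2 j by simp
      then show ?thesis using that j by auto
    qed
    have "eval_word H f r = \<one>\<^bsub>H\<^esub>" using ru e eval_word_normalize[OF H f u] by simp
    then show "r \<in> kernel ?F H (eval_word H f)" using rc by (simp add: kernel_def)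
  qed
  have "NC m k \<subseteq> kernel ?F H (eval_word H f)"
    unfolding NC_def by (rule normal_closure_min[OF group_hom.normal_kernel[OF gh] rk])
  then obtain h where h: "h \<in> hom (Gmk m k) H" and hx: "\<forall>x\<in>carrier ?F. h (NC m k #>\<^bsub>?F\<^esub> x) = eval_word H f x"
    using induced_hom[OF group_FreeGroup H NC_normal eh] unfolding Gmk_NC by blast
  show ?thesis
  proof (intro bexI[OF _ h] ballI)
    fix i assume i: "i \<in> {1..m+k+1}"
    show "h (agen m k i) = f i" unfolding agen_NC using hx gen_carrier[OF i] eval_word_gen[OF H f i] by simp
  qed
qed


lemma (in group) inv_cancel_l1 [simp]: "x \<in> carrier G \<Longrightarrow> y \<in> carrier G \<Longrightarrow> inv x \<otimes> (x \<otimes> y) = y"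
  by (simp add: m_assoc[symmetric])
lemma (in group) inv_cancel_l2 [simp]: "x \<in> carrier G \<Longrightarrow> y \<in> carrier G \<Longrightarrow> x \<otimes> (inv x \<otimes> y) = y"
  by (simp add: m_assoc[symmetric])
lemma (in group) aux1:
  assumes c: "x \<in> carrier G" "y \<in> carrier G" "z \<in> carrier G" and e: "x \<otimes> y = y \<otimes> z"
  shows "inv y = inv z \<otimes> (inv y \<otimes> x)"
proof -
  have "inv y \<otimes> x \<otimes> y = z" using c e by (simp add: m_assoc)
  then have "inv y \<otimes> x = z \<otimes> inv y" using c by (metis inv_closed inv_solve_right m_closed)
  then show ?thesis using c by (simp add: m_assoc[symmetric])
qed

lemma gprod_Nil[simp]: "gprod G [] = \<one>\<^bsub>G\<^esub>" by (simp add: gprod_def)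
lemma gprod_Cons[simp]: "gprod G (x # xs) = x \<otimes>\<^bsub>G\<^esub> gprod G xs" by (simp add: gprod_def)

lemma gprod_closed: "group G \<Longrightarrow> set xs \<subseteq> carrier G \<Longrightarrow> gprod G xs \<in> carrier G"
  by (induction xs) (auto intro: group.is_monoid monoid.m_closed)

lemma gprod_snoc: "group G \<Longrightarrow> set xs \<subseteq> carrier G \<Longrightarrow> x \<in> carrier G \<Longrightarrow>
   gprod G (xs @ [x]) = gprod G xs \<otimes>\<^bsub>G\<^esub> x"
proof (induction xs)
  case Nil then show ?case by (simp add: group.is_monoid)
next
  case (Cons y xs)
  then show ?case using gprod_closed[of G xs] by (simp add: group.is_monoid monoid.m_assoc)
qed

lemma conj_generate:
  fixes G (structure)
  assumes G: "group G" and S: "S \<subseteq> carrier G" and x: "x \<in> carrier G"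
    and gens: "\<forall>g\<in>S. x \<otimes> g \<otimes> inv x \<in> generate G S"
    and h: "h \<in> generate G S"
  shows "x \<otimes> h \<otimes> inv x \<in> generate G S"
  using h
proof (induction rule: generate.induct)
  interpret group G by (rule G)
  case one then show ?case using x by (simp add: generate.one)
next
  interpret group G by (rule G)
  case (incl h) then show ?case using gens by blast
next
  interpret group G by (rule G)
  case (inv h)
  have hc: "h \<in> carrier G" using inv S by blast
  have "x \<otimes> inv h \<otimes> inv x = inv (x \<otimes> h \<otimes> inv x)"
    using hc x by (simp add: inv_mult_group m_assoc)
  then show ?case using generate_m_inv_closed[OF S] gens inv by simp
next
  interpret group G by (rule G)
  case (eng h1 h2)
  have c: "h1 \<in> carrier G" "h2 \<in> carrier G" using eng generate_in_carrier[OF S] by auto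
  have "x \<otimes> (h1 \<otimes> h2) \<otimes> inv x = (x \<otimes> h1 \<otimes> inv x) \<otimes> (x \<otimes> h2 \<otimes> inv x)"
  proof -
    have "inv x \<otimes> (x \<otimes> (h2 \<otimes> inv x)) = h2 \<otimes> inv x"
      using c x by (metis inv_closed l_inv l_one m_assoc m_closed)
    then show ?thesis using c x by (simp add: m_assoc)
  qed
  then show ?case using eng generate.eng by metis
qed

lemma eval_word_in:
  fixes G (structure) and XX :: "'b set" and f :: "'a \<Rightarrow> 'b"
  assumes G: "group G" and XX: "\<one> \<in> XX" "\<forall>a\<in>XX. \<forall>b\<in>XX. a \<otimes> b \<in> XX"
    and fx: "\<forall>x\<in>S. f x \<in> XX \<and> inv (f x) \<in> XX" and w: "fst ` set w \<subseteq> S"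
  shows "eval_word G f w \<in> XX"
  using w
proof (induction w)
  case Nil then show ?case using XX by simp
next
  case (Cons l w)
  obtain x b where l: "l = (x,b)" by (cases l)
  then show ?case using Cons fx XX by auto
qed

locale Gctx =
  fixes m k :: nat
  assumes km: "k \<le> m"
begin

abbreviation "GG \<equiv> Gmk m k"
abbreviation "a \<equiv> agen m k"

sublocale G: group GG by (rule group_Gmk)

definition c :: "nat \<Rightarrow> nat word set" where "c u = a 1 \<otimes>\<^bsub>GG\<^esub> inv\<^bsub>GG\<^esub> (a u)"
definition t :: "nat \<Rightarrow> nat word set" where "t u = inv\<^bsub>GG\<^esub> (a u) \<otimes>\<^bsub>GG\<^esub> a 1"

abbreviation "Fs \<equiv> Fsub m k"
abbreviation "gens \<equiv> Aelt m k ` {1..m} \<union> Belt m k ` {1..k}"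

lemma ac: "u \<in> {1..m+k+1} \<Longrightarrow> a u \<in> carrier GG" by (rule agen_carrier)
lemma ac1: "a 1 \<in> carrier GG" by (rule ac) simp

lemma Aelt_carrier: "1 \<le> n \<Longrightarrow> n \<le> m \<Longrightarrow> Aelt m k n \<in> carrier GG"
  unfolding Aelt_def using ac by simp
lemma Belt_carrier: "1 \<le> j \<Longrightarrow> j \<le> k \<Longrightarrow> Belt m k j \<in> carrier GG"
  unfolding Belt_def using ac by simp

lemma gens_carrier: "gens \<subseteq> carrier GG"
  using Aelt_carrier Belt_carrier by auto

lemma Fs_sub: "subgroup Fs GG"
  unfolding Fsub_def by (rule G.generate_is_subgroup[OF gens_carrier])

lemma A_in: "1 \<le> n \<Longrightarrow> n \<le> m \<Longrightarrow> Aelt m k n \<in> Fs"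
  unfolding Fsub_def by (rule generate.incl) auto
lemma B_in: "1 \<le> j \<Longrightarrow> j \<le> k \<Longrightarrow> Belt m k j \<in> Fs"
  unfolding Fsub_def by (rule generate.incl) auto

lemma c_step_A:
  assumes "1 \<le> n" "n \<le> m"
  shows "c (n+1) = c n \<otimes>\<^bsub>GG\<^esub> Aelt m k n"
proof -
  have x: "a n \<in> carrier GG" "a (n+1) \<in> carrier GG" using ac assms by auto
  have r: "a n \<otimes>\<^bsub>GG\<^esub> a (n+1) = a (n+1) \<otimes>\<^bsub>GG\<^esub> a n" using rel_comm assms by blast
  have "inv\<^bsub>GG\<^esub> (a (n+1)) = inv\<^bsub>GG\<^esub> (a n) \<otimes>\<^bsub>GG\<^esub> (inv\<^bsub>GG\<^esub> (a (n+1)) \<otimes>\<^bsub>GG\<^esub> a n)"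
    by (rule G.aux1[OF x(1,2,1) r])
  then show ?thesis unfolding c_def Aelt_def using x ac1 by (simp add: G.m_assoc)
qed

lemma c_step_B:
  assumes "1 \<le> j" "j \<le> k"
  shows "c (m+j+1) = c (m+j) \<otimes>\<^bsub>GG\<^esub> Belt m k j"
proof -
  have x: "a j \<in> carrier GG" "a (m+j+1) \<in> carrier GG" "a (m+j) \<in> carrier GG" using ac assms by auto
  have r: "a j \<otimes>\<^bsub>GG\<^esub> a (m+j+1) = a (m+j+1) \<otimes>\<^bsub>GG\<^esub> a (m+j)" using rel_conj assms by blast
  have "inv\<^bsub>GG\<^esub> (a (m+j+1)) = inv\<^bsub>GG\<^esub> (a (m+j)) \<otimes>\<^bsub>GG\<^esub> (inv\<^bsub>GG\<^esub> (a (m+j+1)) \<otimes>\<^bsub>GG\<^esub> a j)"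
    by (rule G.aux1[OF x(1,2,3) r])
  then show ?thesis unfolding c_def Belt_def using x ac1 by (simp add: G.m_assoc)
qed

lemma t_step_A:
  assumes "1 \<le> n" "n \<le> m"
  shows "t (n+1) = Aelt m k n \<otimes>\<^bsub>GG\<^esub> t n"
  unfolding t_def Aelt_def using ac assms ac1 by (simp add: G.m_assoc G.inv_solve_left)

lemma t_step_B:
  assumes "1 \<le> j" "j \<le> k"
  shows "t (m+j+1) = Belt m k j \<otimes>\<^bsub>GG\<^esub> t j"
  unfolding t_def Belt_def using ac assms ac1 km by (simp add: G.m_assoc G.inv_solve_left)

lemma c1: "c 1 = \<one>\<^bsub>GG\<^esub>" unfolding c_def using ac1 by simp
lemma t1: "t 1 = \<one>\<^bsub>GG\<^esub>" unfolding t_def using ac1 by simp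

lemma ct_in: "u \<in> {1..m+k+1} \<Longrightarrow> c u \<in> Fs \<and> t u \<in> Fs"
proof (induction u rule: nat_less_induct)
  case (1 u)
  show ?case
  proof (cases "u = 1")
    case True then show ?thesis using c1 t1 subgroup.one_closed[OF Fs_sub] by simp
  next
    case False
    then have u2: "2 \<le> u" using 1 by auto
    show ?thesis
    proof (cases "u \<le> m + 1")
      case True
      define n where "n = u - 1"
      have n: "1 \<le> n" "n \<le> m" "u = n + 1" using u2 True n_def by auto
      have IH: "c n \<in> Fs \<and> t n \<in> Fs" using 1 n by auto
      then show ?thesis using c_step_A[OF n(1,2)] t_step_A[OF n(1,2)] A_in[OF n(1,2)] n(3)
        subgroup.m_closed[OF Fs_sub] by simp
    next
      case False
      define j where "j = u - m - 1"
      have j: "1 \<le> j" "j \<le> k" "u = m + j + 1" using False 1 j_def by auto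
      have IH: "c (m+j) \<in> Fs \<and> t j \<in> Fs" using 1 j by auto
      then show ?thesis using c_step_B[OF j(1,2)] t_step_B[OF j(1,2)] B_in[OF j(1,2)] j(3)
        subgroup.m_closed[OF Fs_sub] by simp
    qed
  qed
qed

lemma c_carrier: "u \<in> {1..m+k+1} \<Longrightarrow> c u \<in> carrier GG"
  using ct_in subgroup.mem_carrier[OF Fs_sub] by blast
lemma t_carrier: "u \<in> {1..m+k+1} \<Longrightarrow> t u \<in> carrier GG"
  using ct_in subgroup.mem_carrier[OF Fs_sub] by blast

lemma conjA:
  assumes "1 \<le> n" "n \<le> m"
  shows "a 1 \<otimes>\<^bsub>GG\<^esub> Aelt m k n \<otimes>\<^bsub>GG\<^esub> inv\<^bsub>GG\<^esub> (a 1) = c (n+1) \<otimes>\<^bsub>GG\<^esub> inv\<^bsub>GG\<^esub> (c n)"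
  unfolding c_def Aelt_def using ac assms ac1 by (simp add: G.m_assoc G.inv_mult_group)

lemma conjB:
  assumes "1 \<le> j" "j \<le> k"
  shows "a 1 \<otimes>\<^bsub>GG\<^esub> Belt m k j \<otimes>\<^bsub>GG\<^esub> inv\<^bsub>GG\<^esub> (a 1) = c (m+j+1) \<otimes>\<^bsub>GG\<^esub> inv\<^bsub>GG\<^esub> (c j)"
  unfolding c_def Belt_def using ac assms ac1 km by (simp add: G.m_assoc G.inv_mult_group)

end


lemma (in group) aux2:
  assumes c: "x \<in> carrier G" "y \<in> carrier G" "z \<in> carrier G" and e: "x \<otimes> y = y \<otimes> z"
  shows "inv y \<otimes> x = z \<otimes> inv y"
proof -
  have "inv y \<otimes> x \<otimes> y = z" using c e by (simp add: m_assoc)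
  then show "inv y \<otimes> x = z \<otimes> inv y" using c by (metis inv_closed inv_solve_right m_closed)
qed

context Gctx begin

lemma conjA':
  assumes "1 \<le> n" "n \<le> m"
  shows "inv\<^bsub>GG\<^esub> (a 1) \<otimes>\<^bsub>GG\<^esub> Aelt m k n \<otimes>\<^bsub>GG\<^esub> a 1 = inv\<^bsub>GG\<^esub> (t n) \<otimes>\<^bsub>GG\<^esub> t (n+1)"
proof -
  have x: "a n \<in> carrier GG" "a (n+1) \<in> carrier GG" using ac assms by auto
  have r: "a n \<otimes>\<^bsub>GG\<^esub> a (n+1) = a (n+1) \<otimes>\<^bsub>GG\<^esub> a n" using rel_comm assms by blast
  have e: "Aelt m k n = a n \<otimes>\<^bsub>GG\<^esub> inv\<^bsub>GG\<^esub> (a (n+1))"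
    unfolding Aelt_def by (rule G.aux2[OF x(1,2,1) r])
  show ?thesis unfolding e t_def using x ac1 by (simp add: G.m_assoc G.inv_mult_group)
qed

lemma conjB':
  assumes "1 \<le> j" "j \<le> k"
  shows "inv\<^bsub>GG\<^esub> (a 1) \<otimes>\<^bsub>GG\<^esub> Belt m k j \<otimes>\<^bsub>GG\<^esub> a 1 = inv\<^bsub>GG\<^esub> (t (m+j)) \<otimes>\<^bsub>GG\<^esub> t (m+j+1)"
proof -
  have x: "a j \<in> carrier GG" "a (m+j+1) \<in> carrier GG" "a (m+j) \<in> carrier GG" using ac assms by auto
  have r: "a j \<otimes>\<^bsub>GG\<^esub> a (m+j+1) = a (m+j+1) \<otimes>\<^bsub>GG\<^esub> a (m+j)" using rel_conj assms by blast
  have e: "Belt m k j = a (m+j) \<otimes>\<^bsub>GG\<^esub> inv\<^bsub>GG\<^esub> (a (m+j+1))"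
    unfolding Belt_def by (rule G.aux2[OF x(1,2,3) r])
  show ?thesis unfolding e t_def using x ac1 by (simp add: G.m_assoc G.inv_mult_group)
qed

lemma Fs_closed: "x \<in> Fs \<Longrightarrow> y \<in> Fs \<Longrightarrow> x \<otimes>\<^bsub>GG\<^esub> y \<in> Fs"
  using subgroup.m_closed[OF Fs_sub] by blast
lemma Fs_inv: "x \<in> Fs \<Longrightarrow> inv\<^bsub>GG\<^esub> x \<in> Fs"
  using subgroup.m_inv_closed[OF Fs_sub] by blast
lemma Fs_carrier: "x \<in> Fs \<Longrightarrow> x \<in> carrier GG"
  using subgroup.mem_carrier[OF Fs_sub] by blast

lemma conj1: "h \<in> Fs \<Longrightarrow> a 1 \<otimes>\<^bsub>GG\<^esub> h \<otimes>\<^bsub>GG\<^esub> inv\<^bsub>GG\<^esub> (a 1) \<in> Fs"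
  unfolding Fsub_def
proof (rule conj_generate[OF group_Gmk gens_carrier ac1])
  show "\<forall>g\<in>gens. a 1 \<otimes>\<^bsub>GG\<^esub> g \<otimes>\<^bsub>GG\<^esub> inv\<^bsub>GG\<^esub> (a 1) \<in> generate GG gens"
  proof
    fix g assume "g \<in> gens"
    then show "a 1 \<otimes>\<^bsub>GG\<^esub> g \<otimes>\<^bsub>GG\<^esub> inv\<^bsub>GG\<^esub> (a 1) \<in> generate GG gens"
    proof
      assume "g \<in> Aelt m k ` {1..m}"
      then obtain n where n: "1 \<le> n" "n \<le> m" "g = Aelt m k n" by auto
      have "c (n+1) \<otimes>\<^bsub>GG\<^esub> inv\<^bsub>GG\<^esub> (c n) \<in> Fs" using ct_in n Fs_closed Fs_inv by simp
      then show ?thesis using conjA[OF n(1,2)] n(3) by (simp add: Fsub_def)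
    next
      assume "g \<in> Belt m k ` {1..k}"
      then obtain j where j: "1 \<le> j" "j \<le> k" "g = Belt m k j" by auto
      have "c (m+j+1) \<otimes>\<^bsub>GG\<^esub> inv\<^bsub>GG\<^esub> (c j) \<in> Fs" using ct_in j Fs_closed Fs_inv km by simp
      then show ?thesis using conjB[OF j(1,2)] j(3) by (simp add: Fsub_def)
    qed
  qed
qed

lemma conj2: "h \<in> Fs \<Longrightarrow> inv\<^bsub>GG\<^esub> (a 1) \<otimes>\<^bsub>GG\<^esub> h \<otimes>\<^bsub>GG\<^esub> a 1 \<in> Fs"
proof -
  assume h: "h \<in> Fs"
  have "inv\<^bsub>GG\<^esub> (a 1) \<otimes>\<^bsub>GG\<^esub> h \<otimes>\<^bsub>GG\<^esub> inv\<^bsub>GG\<^esub> (inv\<^bsub>GG\<^esub> (a 1)) \<in> Fs"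
    unfolding Fsub_def
  proof (rule conj_generate[OF group_Gmk gens_carrier G.inv_closed[OF ac1]])
    show "h \<in> generate GG gens" using h by (simp add: Fsub_def)
    show "\<forall>g\<in>gens. inv\<^bsub>GG\<^esub> (a 1) \<otimes>\<^bsub>GG\<^esub> g \<otimes>\<^bsub>GG\<^esub> inv\<^bsub>GG\<^esub> (inv\<^bsub>GG\<^esub> (a 1)) \<in> generate GG gens"
    proof
      fix g assume "g \<in> gens"
      then show "inv\<^bsub>GG\<^esub> (a 1) \<otimes>\<^bsub>GG\<^esub> g \<otimes>\<^bsub>GG\<^esub> inv\<^bsub>GG\<^esub> (inv\<^bsub>GG\<^esub> (a 1)) \<in> generate GG gens"
      proof
        assume "g \<in> Aelt m k ` {1..m}"
        then obtain n where n: "1 \<le> n" "n \<le> m" "g = Aelt m k n" by auto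
        have "inv\<^bsub>GG\<^esub> (t n) \<otimes>\<^bsub>GG\<^esub> t (n+1) \<in> Fs" using ct_in n Fs_closed Fs_inv by simp
        then show ?thesis using conjA'[OF n(1,2)] n(3) ac1 by (simp add: Fsub_def)
      next
        assume "g \<in> Belt m k ` {1..k}"
        then obtain j where j: "1 \<le> j" "j \<le> k" "g = Belt m k j" by auto
        have "inv\<^bsub>GG\<^esub> (t (m+j)) \<otimes>\<^bsub>GG\<^esub> t (m+j+1) \<in> Fs" using ct_in j Fs_closed Fs_inv km by simp
        then show ?thesis using conjB'[OF j(1,2)] j(3) ac1 by (simp add: Fsub_def)
      qed
    qed
  qed
  then show ?thesis using ac1 by simp
qed

definition NX :: "nat word set set" where
  "NX = {x \<in> carrier GG. (\<forall>h\<in>Fs. x \<otimes>\<^bsub>GG\<^esub> h \<otimes>\<^bsub>GG\<^esub> inv\<^bsub>GG\<^esub> x \<in> Fs) \<and> (\<forall>h\<in>Fs. inv\<^bsub>GG\<^esub> x \<otimes>\<^bsub>GG\<^esub> h \<otimes>\<^bsub>GG\<^esub> x \<in> Fs)}"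

lemma NX_mult: "x \<in> NX \<Longrightarrow> y \<in> NX \<Longrightarrow> x \<otimes>\<^bsub>GG\<^esub> y \<in> NX"
proof -
  assume x: "x \<in> NX" and y: "y \<in> NX"
  have xc: "x \<in> carrier GG" and yc: "y \<in> carrier GG" using x y by (auto simp: NX_def)
  have "x \<otimes>\<^bsub>GG\<^esub> y \<otimes>\<^bsub>GG\<^esub> h \<otimes>\<^bsub>GG\<^esub> inv\<^bsub>GG\<^esub> (x \<otimes>\<^bsub>GG\<^esub> y) \<in> Fs" if h: "h \<in> Fs" for h
  proof -
    have hc: "h \<in> carrier GG" using h Fs_carrier by blast
    have "x \<otimes>\<^bsub>GG\<^esub> y \<otimes>\<^bsub>GG\<^esub> h \<otimes>\<^bsub>GG\<^esub> inv\<^bsub>GG\<^esub> (x \<otimes>\<^bsub>GG\<^esub> y)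
          = x \<otimes>\<^bsub>GG\<^esub> (y \<otimes>\<^bsub>GG\<^esub> h \<otimes>\<^bsub>GG\<^esub> inv\<^bsub>GG\<^esub> y) \<otimes>\<^bsub>GG\<^esub> inv\<^bsub>GG\<^esub> x"
      using xc yc hc by (simp add: G.m_assoc G.inv_mult_group)
    moreover have "y \<otimes>\<^bsub>GG\<^esub> h \<otimes>\<^bsub>GG\<^esub> inv\<^bsub>GG\<^esub> y \<in> Fs" using y h by (auto simp: NX_def)
    ultimately show ?thesis using x by (auto simp: NX_def)
  qed
  moreover have "inv\<^bsub>GG\<^esub> (x \<otimes>\<^bsub>GG\<^esub> y) \<otimes>\<^bsub>GG\<^esub> h \<otimes>\<^bsub>GG\<^esub> (x \<otimes>\<^bsub>GG\<^esub> y) \<in> Fs" if h: "h \<in> Fs" for h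
  proof -
    have hc: "h \<in> carrier GG" using h Fs_carrier by blast
    have "inv\<^bsub>GG\<^esub> (x \<otimes>\<^bsub>GG\<^esub> y) \<otimes>\<^bsub>GG\<^esub> h \<otimes>\<^bsub>GG\<^esub> (x \<otimes>\<^bsub>GG\<^esub> y)
          = inv\<^bsub>GG\<^esub> y \<otimes>\<^bsub>GG\<^esub> (inv\<^bsub>GG\<^esub> x \<otimes>\<^bsub>GG\<^esub> h \<otimes>\<^bsub>GG\<^esub> x) \<otimes>\<^bsub>GG\<^esub> y"
      using xc yc hc by (simp add: G.m_assoc G.inv_mult_group)
    moreover have "inv\<^bsub>GG\<^esub> x \<otimes>\<^bsub>GG\<^esub> h \<otimes>\<^bsub>GG\<^esub> x \<in> Fs" using x h by (auto simp: NX_def)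
    ultimately show ?thesis using y by (auto simp: NX_def)
  qed
  ultimately show ?thesis using xc yc by (simp add: NX_def)
qed

lemma NX_inv: "x \<in> NX \<Longrightarrow> inv\<^bsub>GG\<^esub> x \<in> NX"
  by (auto simp: NX_def)

lemma Fs_NX: "x \<in> Fs \<Longrightarrow> x \<in> NX"
  unfolding NX_def using Fs_carrier Fs_closed Fs_inv by auto

lemma a1_NX: "a 1 \<in> NX"
  unfolding NX_def using ac1 conj1 conj2 by auto

lemma a_eq: "u \<in> {1..m+k+1} \<Longrightarrow> a u = inv\<^bsub>GG\<^esub> (c u) \<otimes>\<^bsub>GG\<^esub> a 1"
  unfolding c_def using ac ac1 by (simp add: G.inv_mult_group G.m_assoc)

lemma a_NX: "u \<in> {1..m+k+1} \<Longrightarrow> a u \<in> NX"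
  using a_eq ct_in Fs_NX NX_inv NX_mult a1_NX by metis

lemma carrier_NX: "g \<in> carrier GG \<Longrightarrow> g \<in> NX"
proof -
  assume "g \<in> carrier GG"
  then obtain w where w: "w \<in> carrier (FreeGroup {1..m+k+1})" "g = eval_word GG a w"
    using carrier_Gmk_eval by blast
  have "eval_word GG a w \<in> NX"
  proof (rule eval_word_in[OF group_Gmk])
    show "\<one>\<^bsub>GG\<^esub> \<in> NX" using Fs_NX subgroup.one_closed[OF Fs_sub] by blast
    show "\<forall>x\<in>NX. \<forall>y\<in>NX. x \<otimes>\<^bsub>GG\<^esub> y \<in> NX" using NX_mult by blast
    show "\<forall>x\<in>{1..m+k+1}. a x \<in> NX \<and> inv\<^bsub>GG\<^esub> (a x) \<in> NX" using a_NX NX_inv by blast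
    show "fst ` set w \<subseteq> {1..m+k+1}" using w by (simp add: carrier_FreeGroup)
  qed
  then show ?thesis using w by simp
qed

lemma Fs_normal: "Fs \<lhd> GG"
  unfolding G.normal_inv_iff using Fs_sub carrier_NX by (auto simp: NX_def)

end

context Gctx begin

definition K where "K = Fs <#>\<^bsub>GG\<^esub> generate GG {a 1}"

lemma gen_a1_sub: "subgroup (generate GG {a 1}) GG"
  using G.generate_is_subgroup ac1 by simp

lemma K_sub: "subgroup K GG"
proof -
  have "second_isomorphism_grp Fs GG (generate GG {a 1})"
    unfolding second_isomorphism_grp_def second_isomorphism_grp_axioms_def
    using Fs_normal gen_a1_sub by simp
  then show ?thesis unfolding K_def by (rule second_isomorphism_grp.normal_set_mult_subgroup)
qed

lemma a_K: "u \<in> {1..m+k+1} \<Longrightarrow> a u \<in> K"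
proof -
  assume u: "u \<in> {1..m+k+1}"
  have "inv\<^bsub>GG\<^esub> (c u) \<in> Fs" using ct_in[OF u] Fs_inv by blast
  moreover have "a 1 \<in> generate GG {a 1}" by (rule generate.incl) simp
  ultimately show ?thesis unfolding K_def set_mult_def using a_eq[OF u] by blast
qed

lemma K_carrier: "K = carrier GG"
proof
  show "K \<subseteq> carrier GG" using subgroup.subset[OF K_sub] .
  show "carrier GG \<subseteq> K"
  proof
    fix g assume "g \<in> carrier GG"
    then obtain w where w: "w \<in> carrier (FreeGroup {1..m+k+1})" "g = eval_word GG a w"
      using carrier_Gmk_eval by blast
    have "eval_word GG a w \<in> K"
    proof (rule eval_word_in[OF group_Gmk])
      show "\<one>\<^bsub>GG\<^esub> \<in> K" using subgroup.one_closed[OF K_sub] .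
      show "\<forall>x\<in>K. \<forall>y\<in>K. x \<otimes>\<^bsub>GG\<^esub> y \<in> K" using subgroup.m_closed[OF K_sub] by blast
      show "\<forall>x\<in>{1..m+k+1}. a x \<in> K \<and> inv\<^bsub>GG\<^esub> (a x) \<in> K" using a_K subgroup.m_inv_closed[OF K_sub] by blast
      show "fst ` set w \<subseteq> {1..m+k+1}" using w by (simp add: carrier_FreeGroup)
    qed
    then show "g \<in> K" using w by simp
  qed
qed

lemma h0_ex: "\<exists>h \<in> hom GG integer_group. \<forall>i \<in> {1..m+k+1}. h (a i) = 1"
  using Gmk_universal[OF group_integer_group, of m k "\<lambda>_. 1"] by simp

lemma hom_a_pow:
  assumes h: "h \<in> hom GG integer_group" and h1: "h (a 1) = 1"
  shows "h (a 1 [^]\<^bsub>GG\<^esub> (n::int)) = n"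
  using hom_int_pow[OF h ac1 group_Gmk group_integer_group] h1 by simp

lemma Fs_kernel:
  assumes h: "h \<in> hom GG integer_group" and ha: "\<forall>i \<in> {1..m+k+1}. h (a i) = 1"
  shows "Fs \<subseteq> kernel GG integer_group h"
proof -
  have gh: "group_hom GG integer_group h"
    using h group_Gmk by (simp add: group_hom_def group_hom_axioms_def)
  have "gens \<subseteq> kernel GG integer_group h"
  proof
    fix g assume "g \<in> gens"
    then have "g \<in> carrier GG \<and> h g = 0"
    proof
      assume "g \<in> Aelt m k ` {1..m}"
      then obtain n where n: "1 \<le> n" "n \<le> m" "g = Aelt m k n" by auto
      have x: "a n \<in> carrier GG" "a (n+1) \<in> carrier GG" using ac n by auto
      show ?thesis using n x ha hom_mult[OF h] hom_inv'[OF h group_Gmk group_integer_group] Aelt_carrier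
        unfolding Aelt_def by simp
    next
      assume "g \<in> Belt m k ` {1..k}"
      then obtain j where j: "1 \<le> j" "j \<le> k" "g = Belt m k j" by auto
      have x: "a j \<in> carrier GG" "a (m+j+1) \<in> carrier GG" using ac j by auto
      show ?thesis using j x ha hom_mult[OF h] hom_inv'[OF h group_Gmk group_integer_group] Belt_carrier km
        unfolding Belt_def by simp
    qed
    then show "g \<in> kernel GG integer_group h" by (simp add: kernel_def)
  qed
  then show ?thesis unfolding Fsub_def
    by (rule G.generate_subgroup_incl[OF _ group_hom.subgroup_kernel[OF gh]])
qed

lemma kernel_eq:
  assumes h: "h \<in> hom GG integer_group" and ha: "\<forall>i \<in> {1..m+k+1}. h (a i) = 1"
  shows "kernel GG integer_group h = Fs"
proof
  show "Fs \<subseteq> kernel GG integer_group h" by (rule Fs_kernel[OF h ha])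
  show "kernel GG integer_group h \<subseteq> Fs"
  proof
    fix g assume g: "g \<in> kernel GG integer_group h"
    then have gc: "g \<in> carrier GG" and hg: "h g = 0" by (auto simp: kernel_def)
    then have "g \<in> K" using K_carrier by simp
    then obtain f y where f: "f \<in> Fs" and y: "y \<in> generate GG {a 1}" and gfy: "g = f \<otimes>\<^bsub>GG\<^esub> y"
      unfolding K_def set_mult_def by blast
    obtain n where n: "y = a 1 [^]\<^bsub>GG\<^esub> (n::int)" using y G.generate_pow[OF ac1] by auto
    have hf: "h f = 0" using Fs_kernel[OF h ha] f by (auto simp: kernel_def)
    have "h g = h f + h y" using gfy hom_mult[OF h] Fs_carrier[OF f] G.int_pow_closed[OF ac1] n by simp
    moreover have h1: "h (a 1) = 1" using ha by simp
    ultimately have "n = 0" using hf hg hom_a_pow[OF h h1, of n] n by simp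
    then have "y = \<one>\<^bsub>GG\<^esub>" using n by simp
    then show "g \<in> Fs" using gfy f Fs_carrier by simp
  qed
qed

lemma a1_order: "a 1 [^]\<^bsub>GG\<^esub> (n::int) = \<one>\<^bsub>GG\<^esub> \<Longrightarrow> n = 0"
proof -
  assume e: "a 1 [^]\<^bsub>GG\<^esub> n = \<one>\<^bsub>GG\<^esub>"
  obtain h where h: "h \<in> hom GG integer_group" and ha: "\<forall>i \<in> {1..m+k+1}. h (a i) = 1"
    using h0_ex by blast
  have "h (\<one>\<^bsub>GG\<^esub>) = 0" using hom_one[OF h group_Gmk group_integer_group] by simp
  have h1: "h (a 1) = 1" using ha by simp
  have "h (a 1 [^]\<^bsub>GG\<^esub> n) = n" by (rule hom_a_pow[OF h h1])
  then show "n = 0" using e \<open>h (\<one>\<^bsub>GG\<^esub>) = 0\<close> by simp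
qed

lemma inter_triv: "generate GG {a 1} \<inter> Fs = {\<one>\<^bsub>GG\<^esub>}"
proof
  show "{\<one>\<^bsub>GG\<^esub>} \<subseteq> generate GG {a 1} \<inter> Fs"
    using generate.one subgroup.one_closed[OF Fs_sub] by auto
  show "generate GG {a 1} \<inter> Fs \<subseteq> {\<one>\<^bsub>GG\<^esub>}"
  proof
    fix x assume x: "x \<in> generate GG {a 1} \<inter> Fs"
    obtain h where h: "h \<in> hom GG integer_group" and ha: "\<forall>i \<in> {1..m+k+1}. h (a i) = 1"
      using h0_ex by blast
    obtain n where n: "x = a 1 [^]\<^bsub>GG\<^esub> (n::int)" using x G.generate_pow[OF ac1] by auto
    have "h x = 0" using Fs_kernel[OF h ha] x by (auto simp: kernel_def)
    moreover have h1: "h (a 1) = 1" using ha by simp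
    ultimately have "n = 0" using hom_a_pow[OF h h1, of n] n by simp
    then show "x \<in> {\<one>\<^bsub>GG\<^esub>}" using n by simp
  qed
qed

lemma semidirect: "Fs <#>\<^bsub>GG\<^esub> generate GG {a 1} = carrier GG"
  using K_carrier K_def by simp

lemma Pprod_c: "i \<le> m \<Longrightarrow> Pprod m k i = c (i+1)"
proof (induction i)
  case 0 then show ?case using c1 by (simp add: Pprod_def)
next
  case (Suc i)
  have l: "map (Aelt m k) [1..<Suc i + 1] = map (Aelt m k) [1..<i+1] @ [Aelt m k (Suc i)]" by simp
  have sc: "set (map (Aelt m k) [1..<i+1]) \<subseteq> carrier GG" using Aelt_carrier Suc.prems by auto
  have "Pprod m k (Suc i) = Pprod m k i \<otimes>\<^bsub>GG\<^esub> Aelt m k (Suc i)"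
    unfolding Pprod_def l by (rule gprod_snoc[OF group_Gmk[of m k] sc Aelt_carrier]) (use Suc.prems in auto)
  then show ?case using Suc c_step_A[of "Suc i"] by simp
qed

lemma Qprod_c: "j \<le> k \<Longrightarrow> c (m+1) \<otimes>\<^bsub>GG\<^esub> Qprod m k j = c (m+j+1)"
proof (induction j)
  case 0 then show ?case using c_carrier[of "m+1"] by (simp add: Qprod_def)
next
  case (Suc j)
  have l: "map (Belt m k) [1..<Suc j + 1] = map (Belt m k) [1..<j+1] @ [Belt m k (Suc j)]" by simp
  have sc: "set (map (Belt m k) [1..<j+1]) \<subseteq> carrier GG" using Belt_carrier Suc.prems by auto
  have "Qprod m k (Suc j) = Qprod m k j \<otimes>\<^bsub>GG\<^esub> Belt m k (Suc j)"
    unfolding Qprod_def l by (rule gprod_snoc[OF group_Gmk[of m k] sc Belt_carrier]) (use Suc.prems in auto)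
  moreover have "Qprod m k j \<in> carrier GG"
    unfolding Qprod_def using gprod_closed[OF group_Gmk[of m k] sc] .
  ultimately show ?case using Suc c_step_B[of "Suc j"] c_carrier[of "m+1"] Belt_carrier[of "Suc j"]
    by (simp add: G.m_assoc[symmetric])
qed

lemma monoA: "i \<in> {1..m} \<Longrightarrow> a 1 \<otimes>\<^bsub>GG\<^esub> Aelt m k i \<otimes>\<^bsub>GG\<^esub> inv\<^bsub>GG\<^esub> (a 1)
          = Pprod m k (i - 1) \<otimes>\<^bsub>GG\<^esub> Aelt m k i \<otimes>\<^bsub>GG\<^esub> inv\<^bsub>GG\<^esub> (Pprod m k (i - 1))"
proof -
  assume i: "i \<in> {1..m}"
  have "i - 1 \<le> m" using i diff_le_self le_trans by auto
  from Pprod_c[OF this] have "Pprod m k (i-1) = c i" using i by simp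
  then show ?thesis using conjA[of i] c_step_A[of i] i by simp
qed

lemma monoB: "j \<in> {1..k} \<Longrightarrow> a 1 \<otimes>\<^bsub>GG\<^esub> Belt m k j \<otimes>\<^bsub>GG\<^esub> inv\<^bsub>GG\<^esub> (a 1)
          = Pprod m k m \<otimes>\<^bsub>GG\<^esub> Qprod m k j \<otimes>\<^bsub>GG\<^esub> inv\<^bsub>GG\<^esub> (Pprod m k (j - 1))"
proof -
  assume j: "j \<in> {1..k}"
  have "j - 1 \<le> m" using j km diff_le_self le_trans by (metis atLeastAtMost_iff)
  from Pprod_c[OF this] have "Pprod m k (j-1) = c j" using j by simp
  moreover have "Pprod m k m = c (m+1)" using Pprod_c[of m] by simp
  ultimately show ?thesis using conjB[of j] Qprod_c[of j] j by simp
qed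

end

context Gctx begin

definition e :: "nat \<Rightarrow> nat word set" where
  "e n = (if n \<le> m then Aelt m k n else Belt m k (n - m))"

lemma theta_e: "theta m k = eval_word GG e"
  by (simp add: theta_def e_def[abs_def])

lemma e_carrier: "n \<in> {1..m+k} \<Longrightarrow> e n \<in> carrier GG"
  unfolding e_def using Aelt_carrier Belt_carrier by auto

lemma e_Fs: "n \<in> {1..m+k} \<Longrightarrow> e n \<in> Fs"
  unfolding e_def using A_in B_in by auto

lemma theta_hom_S: "S \<subseteq> {1..m+k} \<Longrightarrow> theta m k \<in> hom (FreeGroup S) GG"
  unfolding theta_e by (rule eval_word_hom[OF group_Gmk[of m k]]) (use e_carrier in blast)

lemma theta_hom: "theta m k \<in> hom (FreeGroup {1..m+k}) GG"
  by (rule theta_hom_S) simp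

lemma theta_gen: "n \<in> {1..m+k} \<Longrightarrow> theta m k (gen n) = e n"
  unfolding theta_e using eval_word_gen[OF group_Gmk[of m k], of "{1..m+k}" e n] e_carrier by blast

lemma theta_image: "theta m k ` carrier (FreeGroup {1..m+k}) = Fs"
proof
  show "theta m k ` carrier (FreeGroup {1..m+k}) \<subseteq> Fs"
  proof
    fix g assume "g \<in> theta m k ` carrier (FreeGroup {1..m+k})"
    then obtain w where w: "w \<in> carrier (FreeGroup {1..m+k})" "g = theta m k w" by blast
    have "eval_word GG e w \<in> Fs"
    proof (rule eval_word_in[OF group_Gmk[of m k]])
      show "\<one>\<^bsub>GG\<^esub> \<in> Fs" using subgroup.one_closed[OF Fs_sub] .
      show "\<forall>x\<in>Fs. \<forall>y\<in>Fs. x \<otimes>\<^bsub>GG\<^esub> y \<in> Fs" using Fs_closed by blast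
      show "\<forall>x\<in>{1..m+k}. e x \<in> Fs \<and> inv\<^bsub>GG\<^esub> (e x) \<in> Fs" using e_Fs Fs_inv by blast
      show "fst ` set w \<subseteq> {1..m+k}" using w by (simp add: carrier_FreeGroup)
    qed
    then show "g \<in> Fs" using w theta_e by simp
  qed
  show "Fs \<subseteq> theta m k ` carrier (FreeGroup {1..m+k})"
    unfolding Fsub_def
  proof (rule G.generate_subgroup_incl)
    have gh: "group_hom (FreeGroup {1..m+k}) GG (theta m k)"
      using theta_hom group_FreeGroup group_Gmk[of m k] by (simp add: group_hom_def group_hom_axioms_def)
    show "subgroup (theta m k ` carrier (FreeGroup {1..m+k})) GG"
      using group_hom.img_is_subgroup[OF gh] .
    show "gens \<subseteq> theta m k ` carrier (FreeGroup {1..m+k})"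
    proof
      fix g assume "g \<in> gens"
      then show "g \<in> theta m k ` carrier (FreeGroup {1..m+k})"
      proof
        assume "g \<in> Aelt m k ` {1..m}"
        then obtain n where n: "1 \<le> n" "n \<le> m" "g = Aelt m k n" by auto
        have "theta m k (gen n) = g" using theta_gen[of n] n by (simp add: e_def)
        then show ?thesis using gen_carrier[of n "{1..m+k}"] n by force
      next
        assume "g \<in> Belt m k ` {1..k}"
        then obtain j where j: "1 \<le> j" "j \<le> k" "g = Belt m k j" by auto
        have "theta m k (gen (m+j)) = g" using theta_gen[of "m+j"] j by (simp add: e_def)
        then show ?thesis using gen_carrier[of "m+j" "{1..m+k}"] j by force
      qed
    qed
  qed
qed

end

declare One_nat_def [simp del]

lemma upt_snoc1: "1 \<le> n \<Longrightarrow> [1..<n+1] = [1..<n] @ [(n::nat)]"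
  by (metis Suc_eq_plus1 upt_Suc_append)

locale Fctx =
  fixes m k :: nat
  assumes kmF: "k \<le> m"
begin

abbreviation "E \<equiv> FreeGroup {1..m+k}"
sublocale F: group E by (rule group_FreeGroup)

definition R :: "nat \<Rightarrow> nat word" where "R n = gprod E (map gen [1..<n+1])"
definition sn :: "nat \<Rightarrow> nat" where "sn n = (if n \<le> m then n - 1 else n - m - 1)"
definition T :: "nat \<Rightarrow> nat word" where
  "T n = (if n \<le> m then gprod E (map gen (rev [1..<n+1]))
          else gen n \<otimes>\<^bsub>E\<^esub> gprod E (map gen (rev [1..<n-m])))"
definition Phi :: "nat word \<Rightarrow> nat word" where
  "Phi = eval_word E (\<lambda>n. R n \<otimes>\<^bsub>E\<^esub> inv\<^bsub>E\<^esub> (R (sn n)))"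
definition Psi :: "nat word \<Rightarrow> nat word" where
  "Psi = eval_word E (\<lambda>n. inv\<^bsub>E\<^esub> (T (n-1)) \<otimes>\<^bsub>E\<^esub> T n)"

lemma gen_c: "n \<in> {1..m+k} \<Longrightarrow> gen n \<in> carrier E" by (rule gen_carrier)

lemma gens_list_c: "n \<le> m+k+1 \<Longrightarrow> set (map gen [1..<n]) \<subseteq> carrier E"
  using gen_c by auto

lemma R_closed: "n \<le> m+k \<Longrightarrow> R n \<in> carrier E"
  unfolding R_def by (rule gprod_closed[OF group_FreeGroup gens_list_c]) simp

lemma R0: "R 0 = \<one>\<^bsub>E\<^esub>" by (simp add: R_def)

lemma R_step: "1 \<le> n \<Longrightarrow> n \<le> m+k \<Longrightarrow> R n = R (n-1) \<otimes>\<^bsub>E\<^esub> gen n"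
proof -
  assume n: "1 \<le> n" "n \<le> m+k"
  have l0: "[1..<n+1] = [1..<n] @ [n]" using upt_snoc1[OF n(1)] .
  have l: "map gen [1..<n+1] = map gen [1..<n-1+1] @ [gen n]" using n l0 by simp
  show ?thesis unfolding R_def l
    by (rule gprod_snoc[OF group_FreeGroup gens_list_c gen_c]) (use n in auto)
qed

lemma sn_lt: "1 \<le> n \<Longrightarrow> sn n < n" by (auto simp: sn_def)
lemma sn_le: "sn n \<le> n" by (auto simp: sn_def)

lemma T_closed: "n \<le> m+k \<Longrightarrow> T n \<in> carrier E"
proof -
  assume n: "n \<le> m+k"
  have a: "set (map gen (rev [1..<n+1])) \<subseteq> carrier E" using gen_c n by auto
  have b: "set (map gen (rev [1..<n-m])) \<subseteq> carrier E" using gen_c n by auto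
  have "n > m \<Longrightarrow> gen n \<otimes>\<^bsub>E\<^esub> gprod E (map gen (rev [1..<n-m])) \<in> carrier E"
    by (rule F.m_closed[OF gen_c gprod_closed[OF group_FreeGroup b]]) (use n in auto)
  then show ?thesis unfolding T_def
    using gprod_closed[OF group_FreeGroup a] by auto
qed

lemma T0: "T 0 = \<one>\<^bsub>E\<^esub>" by (simp add: T_def)

lemma T_step: "1 \<le> n \<Longrightarrow> n \<le> m+k \<Longrightarrow> T n = gen n \<otimes>\<^bsub>E\<^esub> T (sn n)"
proof -
  assume n: "1 \<le> n" "n \<le> m+k"
  show ?thesis
  proof (cases "n \<le> m")
    case True
    have l: "rev [1..<n+1] = n # rev [1..<n-1+1]" using n upt_snoc1[OF n(1)] by simp
    have "sn n = n - 1" "n - 1 \<le> m" using True by (auto simp: sn_def)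
    then show ?thesis unfolding T_def using True l by simp
  next
    case False
    have s: "sn n = n - m - 1" "n - m - 1 \<le> m" using False n kmF by (auto simp: sn_def)
    have eq: "n - m - 1 + 1 = n - m" using False by simp
    have l: "[1..<n - m - 1 + 1] = [1..<n-m]" by (simp only: eq)
    show ?thesis unfolding T_def using False s l by simp
  qed
qed

lemma Phi_val_c: "\<forall>n\<in>{1..m+k}. R n \<otimes>\<^bsub>E\<^esub> inv\<^bsub>E\<^esub> (R (sn n)) \<in> carrier E"
  using R_closed sn_le by (meson F.inv_closed F.m_closed atLeastAtMost_iff le_trans)

lemma Psi_val_c: "\<forall>n\<in>{1..m+k}. inv\<^bsub>E\<^esub> (T (n-1)) \<otimes>\<^bsub>E\<^esub> T n \<in> carrier E"
  using T_closed by auto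

lemma Phi_hom: "Phi \<in> hom E E"
  unfolding Phi_def by (rule eval_word_hom[OF group_FreeGroup Phi_val_c])
lemma Psi_hom: "Psi \<in> hom E E"
  unfolding Psi_def by (rule eval_word_hom[OF group_FreeGroup Psi_val_c])

lemma Phi_gen: "n \<in> {1..m+k} \<Longrightarrow> Phi (gen n) = R n \<otimes>\<^bsub>E\<^esub> inv\<^bsub>E\<^esub> (R (sn n))"
  unfolding Phi_def using eval_word_gen[OF group_FreeGroup Phi_val_c] by blast
lemma Psi_gen: "n \<in> {1..m+k} \<Longrightarrow> Psi (gen n) = inv\<^bsub>E\<^esub> (T (n-1)) \<otimes>\<^bsub>E\<^esub> T n"
  unfolding Psi_def using eval_word_gen[OF group_FreeGroup Psi_val_c] by blast

lemma Phi_c: "w \<in> carrier E \<Longrightarrow> Phi w \<in> carrier E" using Phi_hom by (simp add: hom_in_carrier)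
lemma Psi_c: "w \<in> carrier E \<Longrightarrow> Psi w \<in> carrier E" using Psi_hom by (simp add: hom_in_carrier)
lemma Phi_mult: "u \<in> carrier E \<Longrightarrow> v \<in> carrier E \<Longrightarrow> Phi (u \<otimes>\<^bsub>E\<^esub> v) = Phi u \<otimes>\<^bsub>E\<^esub> Phi v"
  using Phi_hom by (simp add: hom_mult)
lemma Psi_mult: "u \<in> carrier E \<Longrightarrow> v \<in> carrier E \<Longrightarrow> Psi (u \<otimes>\<^bsub>E\<^esub> v) = Psi u \<otimes>\<^bsub>E\<^esub> Psi v"
  using Psi_hom by (simp add: hom_mult)
lemma Phi_inv: "u \<in> carrier E \<Longrightarrow> Phi (inv\<^bsub>E\<^esub> u) = inv\<^bsub>E\<^esub> (Phi u)"
  using hom_inv'[OF Phi_hom group_FreeGroup group_FreeGroup] by blast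
lemma Psi_inv: "u \<in> carrier E \<Longrightarrow> Psi (inv\<^bsub>E\<^esub> u) = inv\<^bsub>E\<^esub> (Psi u)"
  using hom_inv'[OF Psi_hom group_FreeGroup group_FreeGroup] by blast

lemma Psi_R: "n \<le> m+k \<Longrightarrow> Psi (R n) = T n"
proof (induction n)
  case 0 then show ?case using R0 T0 hom_one[OF Psi_hom group_FreeGroup group_FreeGroup] by simp
next
  case (Suc n)
  have "Psi (R (Suc n)) = Psi (R n) \<otimes>\<^bsub>E\<^esub> Psi (gen (Suc n))"
    using R_step[of "Suc n"] Suc.prems R_closed gen_c Psi_mult by simp
  also have "\<dots> = T n \<otimes>\<^bsub>E\<^esub> (inv\<^bsub>E\<^esub> (T n) \<otimes>\<^bsub>E\<^esub> T (Suc n))"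
    using Suc Psi_gen[of "Suc n"] by simp
  also have "\<dots> = T (Suc n)" using T_closed Suc.prems by simp
  finally show ?case .
qed

lemma Phi_T: "n \<le> m+k \<Longrightarrow> Phi (T n) = R n"
proof (induction n rule: nat_less_induct)
  case (1 n)
  show ?case
  proof (cases "n = 0")
    case True then show ?thesis using R0 T0 hom_one[OF Phi_hom group_FreeGroup group_FreeGroup] by simp
  next
    case False
    then have n: "1 \<le> n" "n \<le> m+k" using 1 by auto
    have sl: "sn n < n" "sn n \<le> m+k" using sn_lt[OF n(1)] n by auto
    have "Phi (T n) = Phi (gen n) \<otimes>\<^bsub>E\<^esub> Phi (T (sn n))"
      using T_step[OF n] gen_c T_closed sl n Phi_mult by simp
    also have "\<dots> = R n \<otimes>\<^bsub>E\<^esub> inv\<^bsub>E\<^esub> (R (sn n)) \<otimes>\<^bsub>E\<^esub> R (sn n)"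
      using 1 sl Phi_gen n by simp
    also have "\<dots> = R n" using R_closed sl n by (simp add: F.m_assoc)
    finally show ?thesis .
  qed
qed

lemma PsiPhi: "w \<in> carrier E \<Longrightarrow> Psi (Phi w) = w"
proof -
  assume w: "w \<in> carrier E"
  have h1: "Psi \<circ> Phi \<in> hom E E" by (rule hom_compose[OF Phi_hom Psi_hom])
  have h2: "(\<lambda>x. x) \<in> hom E E" by (simp add: hom_def)
  have "(Psi \<circ> Phi) w = w"
  proof (rule hom_unique_FreeGroup[OF group_FreeGroup h1 h2 _ w], intro ballI)
    fix n assume n: "n \<in> {1..m+k}"
    have sl: "sn n \<le> m+k" using sn_le[of n] n by auto
    have "Psi (Phi (gen n)) = Psi (R n) \<otimes>\<^bsub>E\<^esub> inv\<^bsub>E\<^esub> (Psi (R (sn n)))"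
      using Phi_gen[OF n] R_closed n sl Psi_mult Psi_inv by simp
    also have "\<dots> = gen n" using Psi_R sl n T_step[of n] gen_c[OF n] T_closed[OF sl]
      by (simp add: F.m_assoc)
    finally show "(Psi \<circ> Phi) (gen n) = gen n" by simp
  qed
  then show ?thesis by simp
qed

lemma PhiPsi: "w \<in> carrier E \<Longrightarrow> Phi (Psi w) = w"
proof -
  assume w: "w \<in> carrier E"
  have h1: "Phi \<circ> Psi \<in> hom E E" by (rule hom_compose[OF Psi_hom Phi_hom])
  have h2: "(\<lambda>x. x) \<in> hom E E" by (simp add: hom_def)
  have "(Phi \<circ> Psi) w = w"
  proof (rule hom_unique_FreeGroup[OF group_FreeGroup h1 h2 _ w], intro ballI)
    fix n assume n: "n \<in> {1..m+k}"
    have n1: "n - 1 \<le> m+k" "n \<le> m+k" using n by auto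
    have "Phi (Psi (gen n)) = inv\<^bsub>E\<^esub> (Phi (T (n-1))) \<otimes>\<^bsub>E\<^esub> Phi (T n)"
      using Psi_gen[OF n] T_closed[OF n1(1)] T_closed[OF n1(2)] Phi_mult Phi_inv by simp
    also have "\<dots> = gen n" using Phi_T[OF n1(1)] Phi_T[OF n1(2)] n R_step[of n] gen_c[OF n] R_closed[OF n1(1)] by simp
    finally show "(Phi \<circ> Psi) (gen n) = gen n" by simp
  qed
  then show ?thesis by simp
qed

lemma Phi_R_step: "1 \<le> n \<Longrightarrow> n \<le> m+k \<Longrightarrow>
  Phi (R n) = Phi (R (n-1)) \<otimes>\<^bsub>E\<^esub> (R n \<otimes>\<^bsub>E\<^esub> inv\<^bsub>E\<^esub> (R (sn n)))"
  using R_step[of n] Phi_mult R_closed[of "n-1"] gen_c[of n] Phi_gen[of n] by simp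

end

lemma (in group) aux3:
  "p \<in> carrier G \<Longrightarrow> q \<in> carrier G \<Longrightarrow> r \<in> carrier G \<Longrightarrow>
   inv q \<otimes> inv (p \<otimes> (r \<otimes> inv q)) = inv r \<otimes> inv p"
  by (simp add: inv_mult_group m_assoc)

context Fctx begin

abbreviation "Sym \<equiv> BijGroup (carrier E)"

definition d :: "nat \<Rightarrow> nat word" where "d u = inv\<^bsub>E\<^esub> (R (u - 1))"
definition Xm :: "nat \<Rightarrow> nat word \<Rightarrow> nat word" where
  "Xm u = (\<lambda>z\<in>carrier E. d u \<otimes>\<^bsub>E\<^esub> Phi z)"
definition Lm :: "nat word \<Rightarrow> nat word \<Rightarrow> nat word" where
  "Lm w = (\<lambda>z\<in>carrier E. w \<otimes>\<^bsub>E\<^esub> z)"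

lemma d_c: "u \<in> {1..m+k+1} \<Longrightarrow> d u \<in> carrier E"
proof -
  assume u: "u \<in> {1..m+k+1}"
  then have "u - 1 \<le> m + k" by auto
  then show ?thesis unfolding d_def using R_closed by simp
qed

lemma Xm_Bij: "u \<in> {1..m+k+1} \<Longrightarrow> Xm u \<in> carrier Sym"
proof -
  assume u: "u \<in> {1..m+k+1}"
  note dc = d_c[OF u]
  have "bij_betw (Xm u) (carrier E) (carrier E)"
  proof (rule bij_betw_byWitness[where f'="\<lambda>y. Psi (inv\<^bsub>E\<^esub> (d u) \<otimes>\<^bsub>E\<^esub> y)"])
    show "\<forall>z\<in>carrier E. Psi (inv\<^bsub>E\<^esub> (d u) \<otimes>\<^bsub>E\<^esub> Xm u z) = z"
      using dc Phi_c PsiPhi by (simp add: Xm_def)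
    show "\<forall>y\<in>carrier E. Xm u (Psi (inv\<^bsub>E\<^esub> (d u) \<otimes>\<^bsub>E\<^esub> y)) = y"
      using dc Psi_c PhiPsi by (simp add: Xm_def)
    show "Xm u ` carrier E \<subseteq> carrier E"
    proof (rule image_subsetI)
      fix z assume z: "z \<in> carrier E"
      show "Xm u z \<in> carrier E" using z dc Phi_c[OF z] by (simp add: Xm_def)
    qed
    show "(\<lambda>y. Psi (inv\<^bsub>E\<^esub> (d u) \<otimes>\<^bsub>E\<^esub> y)) ` carrier E \<subseteq> carrier E"
    proof (rule image_subsetI)
      fix z assume z: "z \<in> carrier E"
      show "Psi (inv\<^bsub>E\<^esub> (d u) \<otimes>\<^bsub>E\<^esub> z) \<in> carrier E" using z dc by (simp add: Psi_c)
    qed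
  qed
  then show ?thesis by (simp add: BijGroup_def Bij_def Xm_def)
qed

lemma Lm_Bij: "w \<in> carrier E \<Longrightarrow> Lm w \<in> carrier Sym"
proof -
  assume w: "w \<in> carrier E"
  have "bij_betw (Lm w) (carrier E) (carrier E)"
  proof (rule bij_betw_byWitness[where f'="\<lambda>y. inv\<^bsub>E\<^esub> w \<otimes>\<^bsub>E\<^esub> y"])
    show "\<forall>z\<in>carrier E. inv\<^bsub>E\<^esub> w \<otimes>\<^bsub>E\<^esub> Lm w z = z" using w by (simp add: Lm_def)
    show "\<forall>y\<in>carrier E. Lm w (inv\<^bsub>E\<^esub> w \<otimes>\<^bsub>E\<^esub> y) = y" using w by (simp add: Lm_def)
    show "Lm w ` carrier E \<subseteq> carrier E"
    proof (rule image_subsetI)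
      fix z assume z: "z \<in> carrier E"
      show "Lm w z \<in> carrier E" using z w by (simp add: Lm_def)
    qed
    show "(\<lambda>y. inv\<^bsub>E\<^esub> w \<otimes>\<^bsub>E\<^esub> y) ` carrier E \<subseteq> carrier E"
    proof (rule image_subsetI)
      fix z assume z: "z \<in> carrier E"
      show "inv\<^bsub>E\<^esub> w \<otimes>\<^bsub>E\<^esub> z \<in> carrier E" using z w by simp
    qed
  qed
  then show ?thesis by (simp add: BijGroup_def Bij_def Lm_def)
qed

lemma Sym_mult: "f \<in> carrier Sym \<Longrightarrow> g \<in> carrier Sym \<Longrightarrow> f \<otimes>\<^bsub>Sym\<^esub> g = (\<lambda>z\<in>carrier E. f (g z))"
  by (simp add: BijGroup_def compose_def)

lemma Xm_Xm: "u \<in> {1..m+k+1} \<Longrightarrow> v \<in> {1..m+k+1} \<Longrightarrow>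
  Xm u \<otimes>\<^bsub>Sym\<^esub> Xm v = (\<lambda>z\<in>carrier E. (d u \<otimes>\<^bsub>E\<^esub> Phi (d v)) \<otimes>\<^bsub>E\<^esub> Phi (Phi z))"
proof -
  assume u: "u \<in> {1..m+k+1}" and v: "v \<in> {1..m+k+1}"
  have "Xm u \<otimes>\<^bsub>Sym\<^esub> Xm v = (\<lambda>z\<in>carrier E. Xm u (Xm v z))" using Sym_mult Xm_Bij u v by simp
  also have "\<dots> = (\<lambda>z\<in>carrier E. (d u \<otimes>\<^bsub>E\<^esub> Phi (d v)) \<otimes>\<^bsub>E\<^esub> Phi (Phi z))"
  proof (rule restrict_ext)
    fix z assume z: "z \<in> carrier E"
    have "Xm v z \<in> carrier E" using z d_c[OF v] Phi_c by (simp add: Xm_def)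
    then show "Xm u (Xm v z) = (d u \<otimes>\<^bsub>E\<^esub> Phi (d v)) \<otimes>\<^bsub>E\<^esub> Phi (Phi z)"
      using z d_c[OF v] d_c[OF u] Phi_c Phi_mult by (simp add: Xm_def F.m_assoc)
  qed
  finally show ?thesis .
qed

lemma Phi_d: "u \<in> {1..m+k+1} \<Longrightarrow> Phi (d u) = inv\<^bsub>E\<^esub> (Phi (R (u-1)))"
proof -
  assume u: "u \<in> {1..m+k+1}"
  then have "u - 1 \<le> m + k" by auto
  then show ?thesis unfolding d_def using R_closed Phi_inv by simp
qed

lemma rel1: "1 \<le> i \<Longrightarrow> i \<le> m \<Longrightarrow> Xm i \<otimes>\<^bsub>Sym\<^esub> Xm (i+1) = Xm (i+1) \<otimes>\<^bsub>Sym\<^esub> Xm i"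
proof -
  assume i: "1 \<le> i" "i \<le> m"
  have iu: "i \<in> {1..m+k+1}" "i+1 \<in> {1..m+k+1}" using i by auto
  have i1: "1 \<le> i" "i \<le> m+k" "i - 1 \<le> m+k" using i by auto
  have sn: "sn i = i - 1" using i by (simp add: sn_def)
  have "d i \<otimes>\<^bsub>E\<^esub> Phi (d (i+1)) = d (i+1) \<otimes>\<^bsub>E\<^esub> Phi (d i)"
    unfolding Phi_d[OF iu(1)] Phi_d[OF iu(2)] unfolding d_def
    using Phi_R_step[OF i1(1,2)] sn F.aux3[OF Phi_c[OF R_closed[OF i1(3)]] R_closed[OF i1(3)] R_closed[OF i1(2)]]
    by simp
  then show ?thesis using Xm_Xm iu by simp
qed

lemma rel2: "1 \<le> j \<Longrightarrow> j \<le> k \<Longrightarrow> Xm j \<otimes>\<^bsub>Sym\<^esub> Xm (m+j+1) = Xm (m+j+1) \<otimes>\<^bsub>Sym\<^esub> Xm (m+j)"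
proof -
  assume j: "1 \<le> j" "j \<le> k"
  have ju: "j \<in> {1..m+k+1}" "m+j+1 \<in> {1..m+k+1}" "m+j \<in> {1..m+k+1}" using j by auto
  have j1: "1 \<le> m+j" "m+j \<le> m+k" "m+j-1 \<le> m+k" "j - 1 \<le> m+k" using j by auto
  have sn: "sn (m+j) = j - 1" using j by (simp add: sn_def)
  have e: "m + j + 1 - 1 = m + j" by simp
  have "d j \<otimes>\<^bsub>E\<^esub> Phi (d (m+j+1)) = d (m+j+1) \<otimes>\<^bsub>E\<^esub> Phi (d (m+j))"
    unfolding Phi_d[OF ju(2)] Phi_d[OF ju(3)] unfolding d_def e
    using Phi_R_step[OF j1(1,2)] sn F.aux3[OF Phi_c[OF R_closed[OF j1(3)]] R_closed[OF j1(4)] R_closed[OF j1(2)]]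
    by simp
  then show ?thesis using Xm_Xm ju by simp
qed

lemma XL: "n \<in> {1..m+k} \<Longrightarrow> Xm (n+1) \<otimes>\<^bsub>Sym\<^esub> Lm (gen n) = Xm (sn n + 1)"
proof -
  assume n: "n \<in> {1..m+k}"
  have nu: "n+1 \<in> {1..m+k+1}" "sn n + 1 \<in> {1..m+k+1}" using n sn_le[of n] by auto
  have sl: "sn n \<le> m+k" "n \<le> m+k" using n sn_le[of n] by auto
  have "Xm (n+1) \<otimes>\<^bsub>Sym\<^esub> Lm (gen n) = (\<lambda>z\<in>carrier E. Xm (n+1) (Lm (gen n) z))"
    using Sym_mult Xm_Bij[OF nu(1)] Lm_Bij[OF gen_c[OF n]] by simp
  also have "\<dots> = Xm (sn n + 1)" unfolding Xm_def
  proof (rule restrict_ext)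
    fix z assume z: "z \<in> carrier E"
    have "(\<lambda>z\<in>carrier E. d (n+1) \<otimes>\<^bsub>E\<^esub> Phi z) (Lm (gen n) z) = d (n+1) \<otimes>\<^bsub>E\<^esub> Phi (gen n \<otimes>\<^bsub>E\<^esub> z)"
      using z gen_c[OF n] by (simp add: Lm_def)
    also have "\<dots> = inv\<^bsub>E\<^esub> (R n) \<otimes>\<^bsub>E\<^esub> (R n \<otimes>\<^bsub>E\<^esub> inv\<^bsub>E\<^esub> (R (sn n)) \<otimes>\<^bsub>E\<^esub> Phi z)"
      using z gen_c[OF n] Phi_mult Phi_gen[OF n] by (simp add: d_def)
    also have "\<dots> = d (sn n + 1) \<otimes>\<^bsub>E\<^esub> Phi z"
      using R_closed[OF sl(1)] R_closed[OF sl(2)] Phi_c[OF z] by (simp add: d_def F.m_assoc)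
    finally show "(\<lambda>z\<in>carrier E. d (n+1) \<otimes>\<^bsub>E\<^esub> Phi z) (Lm (gen n) z) = d (sn n + 1) \<otimes>\<^bsub>E\<^esub> Phi z" .
  qed
  finally show ?thesis .
qed

lemma Lm_hom: "Lm \<in> hom E Sym"
proof (rule homI)
  fix w assume "w \<in> carrier E" then show "Lm w \<in> carrier Sym" by (rule Lm_Bij)
next
  fix u v assume u: "u \<in> carrier E" and v: "v \<in> carrier E"
  have "Lm u \<otimes>\<^bsub>Sym\<^esub> Lm v = (\<lambda>z\<in>carrier E. Lm u (Lm v z))" using Sym_mult Lm_Bij u v by simp
  also have "\<dots> = Lm (u \<otimes>\<^bsub>E\<^esub> v)" unfolding Lm_def
    by (rule restrict_ext) (use u v in \<open>simp add: F.m_assoc\<close>)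
  finally show "Lm (u \<otimes>\<^bsub>E\<^esub> v) = Lm u \<otimes>\<^bsub>Sym\<^esub> Lm v" by simp
qed

lemma Lm_inj: "w1 \<in> carrier E \<Longrightarrow> w2 \<in> carrier E \<Longrightarrow> Lm w1 = Lm w2 \<Longrightarrow> w1 = w2"
proof -
  assume w: "w1 \<in> carrier E" "w2 \<in> carrier E" "Lm w1 = Lm w2"
  then have "Lm w1 \<one>\<^bsub>E\<^esub> = Lm w2 \<one>\<^bsub>E\<^esub>" by simp
  then show ?thesis using w by (simp add: Lm_def)
qed

end

declare One_nat_def [simp del]

sublocale Gctx \<subseteq> FF: Fctx m k by unfold_locales (rule km)

context Gctx begin

lemma c_e: "n \<in> {1..m+k} \<Longrightarrow> c (n+1) = c n \<otimes>\<^bsub>GG\<^esub> e n"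
proof -
  assume n: "n \<in> {1..m+k}"
  show ?thesis
  proof (cases "n \<le> m")
    case True then show ?thesis using c_step_A[of n] n by (simp add: e_def)
  next
    case False
    define j where "j = n - m"
    have j: "1 \<le> j" "j \<le> k" "n = m + j" using False n j_def by auto
    show ?thesis using c_step_B[OF j(1,2)] j False by (simp add: e_def)
  qed
qed

lemma e_decomp: "n \<in> {1..m+k} \<Longrightarrow> e n = inv\<^bsub>GG\<^esub> (a (n+1)) \<otimes>\<^bsub>GG\<^esub> a (FF.sn n + 1)"
proof -
  assume n: "n \<in> {1..m+k}"
  show ?thesis
  proof (cases "n \<le> m")
    case True
    have "FF.sn n + 1 = n" using True n by (simp add: FF.sn_def)
    then show ?thesis using True by (simp add: e_def Aelt_def)
  next
    case False
    define j where "j = n - m"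
    have j: "1 \<le> j" "j \<le> k" "n = m + j" using False n j_def by auto
    have "FF.sn n + 1 = j" using False j by (simp add: FF.sn_def)
    then show ?thesis using j False by (simp add: e_def Belt_def)
  qed
qed

lemma conj_e: "n \<in> {1..m+k} \<Longrightarrow>
  a 1 \<otimes>\<^bsub>GG\<^esub> e n \<otimes>\<^bsub>GG\<^esub> inv\<^bsub>GG\<^esub> (a 1) = c (n+1) \<otimes>\<^bsub>GG\<^esub> inv\<^bsub>GG\<^esub> (c (FF.sn n + 1))"
proof -
  assume n: "n \<in> {1..m+k}"
  show ?thesis
  proof (cases "n \<le> m")
    case True
    have "FF.sn n + 1 = n" using True n by (simp add: FF.sn_def)
    then show ?thesis using True conjA[of n] n by (simp add: e_def)
  next
    case False
    define j where "j = n - m"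
    have j: "1 \<le> j" "j \<le> k" "n = m + j" using False n j_def by auto
    have "FF.sn n + 1 = j" using False j by (simp add: FF.sn_def)
    then show ?thesis using j False conjB[OF j(1,2)] by (simp add: e_def)
  qed
qed

lemma rho_ex: "\<exists>\<rho>\<in>hom GG FF.Sym. \<forall>u\<in>{1..m+k+1}. \<rho> (a u) = FF.Xm u"
  by (rule Gmk_universal[OF group_BijGroup]) (use FF.Xm_Bij FF.rel1 FF.rel2 in auto)

lemma theta_inj: "inj_on (theta m k) (carrier (FreeGroup {1..m+k}))"
proof -
  obtain \<rho> where rho: "\<rho> \<in> hom GG FF.Sym" and ra: "\<forall>u\<in>{1..m+k+1}. \<rho> (a u) = FF.Xm u"
    using rho_ex by blast
  have SG: "group FF.Sym" by (rule group_BijGroup)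
  have h1: "\<rho> \<circ> theta m k \<in> hom FF.E FF.Sym" by (rule hom_compose[OF theta_hom rho])
  have eq: "(\<rho> \<circ> theta m k) w = FF.Lm w" if w: "w \<in> carrier FF.E" for w
  proof (rule hom_unique_FreeGroup[OF SG h1 FF.Lm_hom _ w], intro ballI)
    fix n assume n: "n \<in> {1..m+k}"
    have u: "n+1 \<in> {1..m+k+1}" "FF.sn n + 1 \<in> {1..m+k+1}" using n FF.sn_le[of n] by auto
    have "(\<rho> \<circ> theta m k) (gen n) = \<rho> (inv\<^bsub>GG\<^esub> (a (n+1)) \<otimes>\<^bsub>GG\<^esub> a (FF.sn n + 1))"
      using theta_gen[OF n] e_decomp[OF n] by simp
    also have "\<dots> = inv\<^bsub>FF.Sym\<^esub> (FF.Xm (n+1)) \<otimes>\<^bsub>FF.Sym\<^esub> FF.Xm (FF.sn n + 1)"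
      using hom_mult[OF rho] hom_inv'[OF rho group_Gmk SG] ac u ra by simp
    also have "\<dots> = FF.Lm (gen n)"
      using FF.XL[OF n] FF.Xm_Bij[OF u(1)] FF.Lm_Bij[OF FF.gen_c[OF n]] group.inv_cancel_l1[OF SG] by metis
    finally show "(\<rho> \<circ> theta m k) (gen n) = FF.Lm (gen n)" .
  qed
  show ?thesis
  proof (rule inj_onI)
    fix w1 w2 assume w: "w1 \<in> carrier FF.E" "w2 \<in> carrier FF.E" "theta m k w1 = theta m k w2"
    then have "FF.Lm w1 = FF.Lm w2" using eq[of w1] eq[of w2] by simp
    then show "w1 = w2" using FF.Lm_inj w by blast
  qed
qed

lemma theta_R:
  assumes kk: "kk \<le> k" shows "n \<le> m + kk \<Longrightarrow> theta m k (Fctx.R m kk n) = c (n+1)"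
proof (induction n)
  interpret F2: Fctx m kk using kk km by unfold_locales simp
  case 0 then show ?case using c1 hom_one[OF theta_hom_S[of "{1..m+kk}"] group_FreeGroup group_Gmk] kk
    by (simp add: F2.R0 one_FreeGroup)
next
  interpret F2: Fctx m kk using kk km by unfold_locales simp
  case (Suc n)
  have n: "1 \<le> Suc n" "Suc n \<le> m + kk" "Suc n \<in> {1..m+k}" using Suc.prems kk by auto
  have th: "theta m k \<in> hom (FreeGroup {1..m+kk}) GG" using theta_hom_S kk by simp
  have "theta m k (F2.R (Suc n)) = theta m k (F2.R n) \<otimes>\<^bsub>GG\<^esub> theta m k (gen (Suc n))"
    using F2.R_step[OF n(1,2)] hom_mult[OF th] F2.R_closed[of n] F2.gen_c[of "Suc n"] n by simp
  also have "\<dots> = c (Suc n) \<otimes>\<^bsub>GG\<^esub> e (Suc n)" using Suc theta_gen[OF n(3)] by (simp add: Suc_eq_plus1)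
  also have "\<dots> = c (Suc n + 1)" using c_e[OF n(3)] by simp
  finally show ?case by simp
qed

lemma theta_Phi:
  assumes kk: "kk \<le> k" and w: "w \<in> carrier (FreeGroup {1..m+kk})"
  shows "theta m k (Fctx.Phi m kk w) = a 1 \<otimes>\<^bsub>GG\<^esub> theta m k w \<otimes>\<^bsub>GG\<^esub> inv\<^bsub>GG\<^esub> (a 1)"
proof -
  interpret F2: Fctx m kk using kk km by unfold_locales simp
  have th: "theta m k \<in> hom (FreeGroup {1..m+kk}) GG" using theta_hom_S kk by simp
  have h1: "theta m k \<circ> F2.Phi \<in> hom (FreeGroup {1..m+kk}) GG" by (rule hom_compose[OF F2.Phi_hom th])
  have h2: "(\<lambda>w. a 1 \<otimes>\<^bsub>GG\<^esub> theta m k w \<otimes>\<^bsub>GG\<^esub> inv\<^bsub>GG\<^esub> (a 1)) \<in> hom (FreeGroup {1..m+kk}) GG"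
  proof (rule homI)
    fix w assume "w \<in> carrier (FreeGroup {1..m+kk})"
    then show "a 1 \<otimes>\<^bsub>GG\<^esub> theta m k w \<otimes>\<^bsub>GG\<^esub> inv\<^bsub>GG\<^esub> (a 1) \<in> carrier GG"
      using th ac1 by (simp add: hom_in_carrier)
  next
    fix u v assume u: "u \<in> carrier (FreeGroup {1..m+kk})" and v: "v \<in> carrier (FreeGroup {1..m+kk})"
    have c: "theta m k u \<in> carrier GG" "theta m k v \<in> carrier GG" using u v th by (simp_all add: hom_in_carrier)
    show "a 1 \<otimes>\<^bsub>GG\<^esub> theta m k (u \<otimes>\<^bsub>FreeGroup {1..m+kk}\<^esub> v) \<otimes>\<^bsub>GG\<^esub> inv\<^bsub>GG\<^esub> (a 1) =
      (a 1 \<otimes>\<^bsub>GG\<^esub> theta m k u \<otimes>\<^bsub>GG\<^esub> inv\<^bsub>GG\<^esub> (a 1)) \<otimes>\<^bsub>GG\<^esub> (a 1 \<otimes>\<^bsub>GG\<^esub> theta m k v \<otimes>\<^bsub>GG\<^esub> inv\<^bsub>GG\<^esub> (a 1))"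
      using hom_mult[OF th u v] c ac1 by (simp add: G.m_assoc)
  qed
  have "(theta m k \<circ> F2.Phi) w = a 1 \<otimes>\<^bsub>GG\<^esub> theta m k w \<otimes>\<^bsub>GG\<^esub> inv\<^bsub>GG\<^esub> (a 1)"
  proof (rule hom_unique_FreeGroup[OF group_Gmk h1 h2 _ w], intro ballI)
    fix n assume n: "n \<in> {1..m+kk}"
    have nk: "n \<in> {1..m+k}" using n kk by auto
    have sl: "F2.sn n \<le> m + kk" "n \<le> m + kk" using F2.sn_le[of n] n by auto
    have sn: "F2.sn n = FF.sn n" by (simp add: F2.sn_def FF.sn_def)
    have "theta m k (F2.Phi (gen n)) = theta m k (F2.R n) \<otimes>\<^bsub>GG\<^esub> inv\<^bsub>GG\<^esub> (theta m k (F2.R (F2.sn n)))"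
      using F2.Phi_gen[OF n] hom_mult[OF th] hom_inv'[OF th group_FreeGroup group_Gmk]
        F2.R_closed[OF sl(1)] F2.R_closed[OF sl(2)] F2.F.inv_closed[OF F2.R_closed[OF sl(1)]] by simp
    also have "\<dots> = c (n+1) \<otimes>\<^bsub>GG\<^esub> inv\<^bsub>GG\<^esub> (c (FF.sn n + 1))"
      using theta_R[OF kk sl(1)] theta_R[OF kk sl(2)] sn by simp
    also have "\<dots> = a 1 \<otimes>\<^bsub>GG\<^esub> theta m k (gen n) \<otimes>\<^bsub>GG\<^esub> inv\<^bsub>GG\<^esub> (a 1)"
      using conj_e[OF nk] theta_gen[OF nk] by simp
    finally show "(theta m k \<circ> F2.Phi) (gen n) = a 1 \<otimes>\<^bsub>GG\<^esub> theta m k (gen n) \<otimes>\<^bsub>GG\<^esub> inv\<^bsub>GG\<^esub> (a 1)"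
      by simp
  qed
  then show ?thesis by simp
qed

end

theorem proposition5p4:
  fixes m k :: nat
  assumes "1 \<le> m" and "k \<le> m"
  defines "G \<equiv> Gmk m k" and "a1 \<equiv> agen m k 1"
  shows
    "theta m k \<in> hom (FreeGroup {1..m+k}) G
     \<and> inj_on (theta m k) (carrier (FreeGroup {1..m+k}))
     \<and> theta m k ` carrier (FreeGroup {1..m+k}) = Fsub m k
     \<and> (\<exists>h \<in> hom G integer_group. \<forall>i \<in> {1..m+k+1}. h (agen m k i) = 1)
     \<and> (\<forall>h \<in> hom G integer_group. (\<forall>i \<in> {1..m+k+1}. h (agen m k i) = 1)
           \<longrightarrow> kernel G integer_group h = Fsub m k)
     \<and> Fsub m k \<lhd> G
     \<and> (\<forall>n::int. a1 [^]\<^bsub>G\<^esub> n = \<one>\<^bsub>G\<^esub> \<longrightarrow> n = 0)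
     \<and> generate G {a1} \<inter> Fsub m k = {\<one>\<^bsub>G\<^esub>}
     \<and> Fsub m k <#>\<^bsub>G\<^esub> generate G {a1} = carrier G
     \<and> (\<forall>i \<in> {1..m}. a1 \<otimes>\<^bsub>G\<^esub> Aelt m k i \<otimes>\<^bsub>G\<^esub> inv\<^bsub>G\<^esub> a1
          = Pprod m k (i - 1) \<otimes>\<^bsub>G\<^esub> Aelt m k i \<otimes>\<^bsub>G\<^esub> inv\<^bsub>G\<^esub> (Pprod m k (i - 1)))
     \<and> (\<forall>j \<in> {1..k}. a1 \<otimes>\<^bsub>G\<^esub> Belt m k j \<otimes>\<^bsub>G\<^esub> inv\<^bsub>G\<^esub> a1
          = Pprod m k m \<otimes>\<^bsub>G\<^esub> Qprod m k j \<otimes>\<^bsub>G\<^esub> inv\<^bsub>G\<^esub> (Pprod m k (j - 1)))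
     \<and> (\<forall>w \<in> carrier (FreeGroup {1..m+k}). \<exists>w' \<in> carrier (FreeGroup {1..m+k}).
          theta m k w' = a1 \<otimes>\<^bsub>G\<^esub> theta m k w \<otimes>\<^bsub>G\<^esub> inv\<^bsub>G\<^esub> a1
        \<and> theta m m w' = agen m m 1 \<otimes>\<^bsub>Gmk m m\<^esub> theta m m w \<otimes>\<^bsub>Gmk m m\<^esub> inv\<^bsub>Gmk m m\<^esub> (agen m m 1))"
proof -
  interpret Gctx m k by unfold_locales (rule assms(2))
  have Gmm: "Gctx m m" by unfold_locales simp
  have last: "\<forall>w \<in> carrier (FreeGroup {1..m+k}). \<exists>w' \<in> carrier (FreeGroup {1..m+k}).
          theta m k w' = a 1 \<otimes>\<^bsub>GG\<^esub> theta m k w \<otimes>\<^bsub>GG\<^esub> inv\<^bsub>GG\<^esub> (a 1)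
        \<and> theta m m w' = agen m m 1 \<otimes>\<^bsub>Gmk m m\<^esub> theta m m w \<otimes>\<^bsub>Gmk m m\<^esub> inv\<^bsub>Gmk m m\<^esub> (agen m m 1)"
  proof
    fix w assume w: "w \<in> carrier (FreeGroup {1..m+k})"
    show "\<exists>w' \<in> carrier (FreeGroup {1..m+k}).
          theta m k w' = a 1 \<otimes>\<^bsub>GG\<^esub> theta m k w \<otimes>\<^bsub>GG\<^esub> inv\<^bsub>GG\<^esub> (a 1)
        \<and> theta m m w' = agen m m 1 \<otimes>\<^bsub>Gmk m m\<^esub> theta m m w \<otimes>\<^bsub>Gmk m m\<^esub> inv\<^bsub>Gmk m m\<^esub> (agen m m 1)"
    proof (intro bexI conjI)
      show "FF.Phi w \<in> carrier (FreeGroup {1..m+k})" using FF.Phi_c[OF w] .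
      show "theta m k (FF.Phi w) = a 1 \<otimes>\<^bsub>GG\<^esub> theta m k w \<otimes>\<^bsub>GG\<^esub> inv\<^bsub>GG\<^esub> (a 1)"
        using theta_Phi[of k w] w by simp
      show "theta m m (FF.Phi w) = agen m m 1 \<otimes>\<^bsub>Gmk m m\<^esub> theta m m w \<otimes>\<^bsub>Gmk m m\<^esub> inv\<^bsub>Gmk m m\<^esub> (agen m m 1)"
        using Gctx.theta_Phi[OF Gmm, of k w] w assms(2) by simp
    qed
  qed
  show ?thesis unfolding G_def a1_def
    apply (intro conjI)
               apply (rule theta_hom)
              apply (rule theta_inj)
             apply (rule theta_image)
            apply (rule h0_ex)
           apply (use kernel_eq in blast)
          apply (rule Fs_normal)
         apply (use a1_order in blast)
        apply (rule inter_triv)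
       apply (rule semidirect)
      apply (use monoA in blast)
     apply (use monoB in blast)
    apply (rule last)
    done
qed


end
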